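(* Setting and construction as in the context. Assume (i) $g$ is convex and Lipschitz continuous with Lipschitz constant $L_g\ge 0$, and (ii) for every $t\in[0,T]$ the set $\mathbb{W}(t)=B(t)\mathbb{U}\ominus(-E(t)\mathbb{D})$ is nonempty. Let $N\in\mathbb{N}$, levels $\gamma_1,\dots,\gamma_N\in g(\mathbb{R}^n)$, integers $n_k\in\mathbb{N}$, points $\bar x_{i,k}\in g^{-1}(\{\gamma_k\})$ ($1\le i\le n_k$), and controls $\omega_{i,k}\in\mathscr{W}[0,T]$ be given; let $\xi^\star_{i,k}$ be the solution on $[0,T]$ of $\dot\xi(s)=A(s)\xi(s)+\omega_{i,k}(s)$ a.e., $\xi(T)=\bar x_{i,k}$, let $\Omega^\star_k(t)=\mathrm{conv}(\{\xi^\star_{i,k}(t)\}_{i=1}^{n_k})$, and $$\bar v(t,x)=\min_{k\in\{1,\dots,N\}}\Big(L_g\inf_{\xi\in\Omega^\star_k(t)}\|\Phi_A(T,t)(x-\xi)\|+\gamma_k\Big).$$ Then $\bar v(t,x)\ge v(t,x)$ for all $(t,x)\in[0,T]\times\mathbb{R}^n$, where $v$ is the value function defined in the context.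
   Context: Fix $T>0$ and integers $n,m,\ell\ge 1$. Let $A\in C([0,T];\mathbb{R}^{n\times n})$, $B\in C([0,T];\mathbb{R}^{n\times m})$, $E\in C([0,T];\mathbb{R}^{n\times \ell})$, and let $\mathbb{U}\subset\mathbb{R}^m$, $\mathbb{D}\subset\mathbb{R}^\ell$ be compact, convex and nonempty; $g\in C(\mathbb{R}^n;\mathbb{R})$. For $0\le t\le T$, $\mathscr{U}[t,T]$ (resp. $\mathscr{D}[t,T]$) is the set of measurable maps $[t,T]\to\mathbb{U}$ (resp. $[t,T]\to\mathbb{D}$), and $\xi^{u,d}_{t,x}$ is the solution of $\dot\xi(s)=A(s)\xi(s)+B(s)u(s)+E(s)d(s)$ a.e. $s\in(t,T)$, $\xi(t)=x$. A map $\delta:\mathscr{U}[t,T]\to\mathscr{D}[t,T]$ is a non-anticipative strategy if for every $s\in[t,T]$ and $u_1,u_2\in\mathscr{U}[t,T]$, $u_1=u_2$ a.e. on $[t,s]$ implies $\delta[u_1]=\delta[u_2]$ a.e. on $[t,s]$; $\Delta[t,T]$ denotes the set of these. The value function is $v(t,x)=\sup_{\delta\in\Delta[t,T]}\inf_{u\in\mathscr{U}[t,T]}g(\xi^{u,\delta[u]}_{t,x}(T))$. $\Phi_A(s,\tau)$ is the state-transition matrix of $\dot y=A(s)y$. For $Y,Z\subseteq\mathbb{R}^n$: $Y\oplus Z=\{y+z\}$, $Y\ominus Z=\{c:\{c\}\oplus Z\subseteq Y\}$, $PY=\{Py:y\in Y\}$. $\mathscr{W}[t,T]$ is the set of measurable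 $\omega:[t,T]\to\mathbb{R}^n$ with $\omega(s)\in\mathbb{W}(s)$ for all $s$. *)

theory Defs
  imports "HOL-Analysis.Analysis"
begin

definition mink_diff :: "'a::ab_group_add set \<Rightarrow> 'a set \<Rightarrow> 'a set" where
  "mink_diff Y Z = {c. (\<lambda>z. c + z) ` Z \<subseteq> Y}"

text \<open>Measurable maps [t,T] into a set S (values outside [t,T] are irrelevant).\<close>
definition meas_maps :: "'b::euclidean_space set \<Rightarrow> real \<Rightarrow> real \<Rightarrow> (real \<Rightarrow> 'b) set" where
  "meas_maps S t T = {u. u measurable_on {t..T} \<and> (\<forall>s\<in>{t..T}. u s \<in> S)}"

text \<open>xi is a (Caratheodory) solution on [t,T] of
  xi' = A xi + B u + E d, xi(t) = x, in integral form.\<close>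
definition is_traj ::
  "(real \<Rightarrow> real^'n^'n) \<Rightarrow> (real \<Rightarrow> real^'m^'n) \<Rightarrow> (real \<Rightarrow> real^'l^'n) \<Rightarrow>
   real \<Rightarrow> real \<Rightarrow> real^'n \<Rightarrow> (real \<Rightarrow> real^'m) \<Rightarrow> (real \<Rightarrow> real^'l) \<Rightarrow> (real \<Rightarrow> real^'n) \<Rightarrow> bool" where
  "is_traj A B E T t x u d \<xi> \<longleftrightarrow> \<xi> t = x \<and>
     (\<forall>s\<in>{t..T}. ((\<lambda>r. A r *v \<xi> r + B r *v u r + E r *v d r) has_integral (\<xi> s - x)) {t..s})"

definition end_state ::
  "(real \<Rightarrow> real^'n^'n) \<Rightarrow> (real \<Rightarrow> real^'m^'n) \<Rightarrow> (real \<Rightarrow> real^'l^'n) \<Rightarrow>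
   real \<Rightarrow> real \<Rightarrow> real^'n \<Rightarrow> (real \<Rightarrow> real^'m) \<Rightarrow> (real \<Rightarrow> real^'l) \<Rightarrow> real^'n" where
  "end_state A B E T t x u d = (THE y. \<exists>\<xi>. is_traj A B E T t x u d \<xi> \<and> \<xi> T = y)"

definition strategies ::
  "(real^'m) set \<Rightarrow> (real^'l) set \<Rightarrow> real \<Rightarrow> real \<Rightarrow> ((real \<Rightarrow> real^'m) \<Rightarrow> (real \<Rightarrow> real^'l)) set" where
  "strategies U D t T = {\<delta>. (\<forall>u\<in>meas_maps U t T. \<delta> u \<in> meas_maps D t T) \<and>
     (\<forall>s\<in>{t..T}. \<forall>u1\<in>meas_maps U t T. \<forall>u2\<in>meas_maps U t T.
        (AE r in lebesgue. r \<in> {t..s} \<longrightarrow> u1 r = u2 r) \<longrightarrow>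
        (AE r in lebesgue. r \<in> {t..s} \<longrightarrow> \<delta> u1 r = \<delta> u2 r))}"

definition value_fun ::
  "(real \<Rightarrow> real^'n^'n) \<Rightarrow> (real \<Rightarrow> real^'m^'n) \<Rightarrow> (real \<Rightarrow> real^'l^'n) \<Rightarrow>
   (real^'m) set \<Rightarrow> (real^'l) set \<Rightarrow> (real^'n \<Rightarrow> real) \<Rightarrow> real \<Rightarrow> real \<Rightarrow> real^'n \<Rightarrow> real" where
  "value_fun A B E U D g T t x =
     (SUP \<delta>\<in>strategies U D t T. INF u\<in>meas_maps U t T. g (end_state A B E T t x u (\<delta> u)))"

definition state_trans ::
  "(real \<Rightarrow> real^'n^'n) \<Rightarrow> real \<Rightarrow> real \<Rightarrow> real \<Rightarrow> real^'n^'n" where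
  "state_trans A T s \<tau> = (THE M. \<exists>Y. Y \<tau> = mat 1 \<and>
      (\<forall>r\<in>{0..T}. (Y has_vector_derivative (A r ** Y r)) (at r within {0..T})) \<and> Y s = M)"

definition Wset ::
  "(real \<Rightarrow> real^'m^'n) \<Rightarrow> (real \<Rightarrow> real^'l^'n) \<Rightarrow> (real^'m) set \<Rightarrow> (real^'l) set \<Rightarrow> real \<Rightarrow> (real^'n) set" where
  "Wset B E U D t = mink_diff ((\<lambda>u. B t *v u) ` U) ((\<lambda>d. - (E t *v d)) ` D)"

end

theory Submission
  imports Defs
begin

lemma exp_integral:
  fixes K a s :: real
  assumes "K > 0" "a \<le> s"
  shows "((\<lambda>r. exp (2*K*(r-a))) has_integral (exp (2*K*(s-a)) - 1)/(2*K)) {a..s}"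
proof -
  have "((\<lambda>r. exp (2*K*(r-a))) has_integral (exp (2*K*(s-a))/(2*K) - exp (2*K*(a-a))/(2*K))) {a..s}"
  proof (rule fundamental_theorem_of_calculus[OF assms(2)])
    fix x assume "x \<in> {a..s}"
    show "((\<lambda>r. exp (2*K*(r-a))/(2*K)) has_vector_derivative exp (2*K*(x-a))) (at x within {a..s})"
      using assms by (auto intro!: derivative_eq_intros simp: has_real_derivative_iff_has_vector_derivative[symmetric])
  qed
  then show ?thesis by (simp add: diff_divide_distrib)
qed

lemma gronwall_exp:
  fixes \<phi> :: "real \<Rightarrow> real"
  assumes ab: "a \<le> b" and K: "K > 0" and al: "\<alpha> \<ge> 0" and cont: "continuous_on {a..b} \<phi>"
    and le: "\<And>s. s \<in> {a..b} \<Longrightarrow> \<phi> s \<le> \<alpha> + K * integral {a..s} \<phi>"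
  shows "\<And>s. s \<in> {a..b} \<Longrightarrow> \<phi> s \<le> 2*\<alpha>*exp(2*K*(s-a))"
proof -
  obtain B where B: "\<And>s. s \<in> {a..b} \<Longrightarrow> \<phi> s \<le> B" and B0: "B \<ge> 0"
  proof -
    have "bounded (\<phi> ` {a..b})" using compact_continuous_image[OF cont] compact_imp_bounded by blast
    then obtain B where "\<forall>x\<in>\<phi> ` {a..b}. norm x \<le> B" by (auto simp: bounded_iff)
    then have "\<And>s. s \<in> {a..b} \<Longrightarrow> norm (\<phi> s) \<le> B" by blast
    then show ?thesis using that[of "max B 0"] by force
  qed
  have claim: "\<forall>s\<in>{a..b}. \<phi> s \<le> (2*\<alpha> + B*(1/2)^k) * exp(2*K*(s-a))" for k
  proof (induction k)
    case 0
    show ?case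
    proof
      fix s assume s: "s \<in> {a..b}"
      have "1 \<le> exp(2*K*(s-a))" using s K by auto
      then have "B \<le> (2*\<alpha> + B) * exp(2*K*(s-a))" using al B0
        by (metis add_increasing mult_left_mono mult.right_neutral order_trans zero_le_mult_iff mult_nonneg_nonneg order_refl zero_le_numeral)
      then show "\<phi> s \<le> (2*\<alpha> + B*(1/2)^0) * exp(2*K*(s-a))" using B[OF s] by simp
    qed
  next
    case (Suc k)
    show ?case
    proof
      fix s assume s: "s \<in> {a..b}"
      define \<beta> where "\<beta> = 2*\<alpha> + B*(1/2)^k"
      have b0: "\<beta> \<ge> 0" using al B0 by (simp add: \<beta>_def)
      have sub: "{a..s} \<subseteq> {a..b}" using s by auto
      have int1: "\<phi> integrable_on {a..s}"
        using integrable_continuous_real[OF continuous_on_subset[OF cont sub]] .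
      have hi: "((\<lambda>r. \<beta> * exp (2*K*(r-a))) has_integral \<beta> * ((exp (2*K*(s-a)) - 1)/(2*K))) {a..s}"
        using has_integral_mult_right[OF exp_integral[OF K, of a s]] s by auto
      have "integral {a..s} \<phi> \<le> \<beta> * ((exp (2*K*(s-a)) - 1)/(2*K))"
        by (rule has_integral_le[OF integrable_integral[OF int1] hi]) (use Suc sub \<beta>_def in auto)
      then have "\<phi> s \<le> \<alpha> + K * (\<beta> * ((exp (2*K*(s-a)) - 1)/(2*K)))"
        using le[OF s] K by (smt (verit) mult_left_mono)
      also have "\<dots> = \<alpha> + \<beta>/2 * exp (2*K*(s-a)) - \<beta>/2" using K by (simp add: field_simps)
      also have "\<dots> \<le> (\<alpha> + \<beta>/2) * exp (2*K*(s-a))"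
      proof -
        have "1 \<le> exp(2*K*(s-a))" using s K by auto
        then have "\<alpha> \<le> \<alpha> * exp(2*K*(s-a))" using al by (simp add: mult_le_cancel_left1)
        then show ?thesis using b0 by (simp add: algebra_simps)
      qed
      also have "\<alpha> + \<beta>/2 = 2*\<alpha> + B*(1/2)^(Suc k)" by (simp add: \<beta>_def)
      finally show "\<phi> s \<le> (2*\<alpha> + B*(1/2)^(Suc k)) * exp(2*K*(s-a))" .
    qed
  qed
  fix s assume s: "s \<in> {a..b}"
  have lim: "(\<lambda>k. (2*\<alpha> + B*(1/2)^k) * exp(2*K*(s-a))) \<longlonglongrightarrow> (2*\<alpha> + B*0) * exp(2*K*(s-a))"
    by (intro tendsto_intros LIMSEQ_power_zero) auto
  show "\<phi> s \<le> 2*\<alpha>*exp(2*K*(s-a))"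
    using tendsto_lowerbound[OF lim, of "\<phi> s"] claim s by auto
qed

lemma picard:
  fixes L :: "real \<Rightarrow> 'a::euclidean_space \<Rightarrow> 'a" and h :: "real \<Rightarrow> 'a"
  assumes ab: "a \<le> b" and K: "K > 0"
   and lin: "\<And>r. r \<in> {a..b} \<Longrightarrow> linear (L r)"
   and bnd: "\<And>r x. r \<in> {a..b} \<Longrightarrow> norm (L r x) \<le> K * norm x"
   and Lc: "\<And>\<phi>. continuous_on {a..b} \<phi> \<Longrightarrow> continuous_on {a..b} (\<lambda>r. L r (\<phi> r))"
   and hc: "continuous_on {a..b} h"
  shows "\<exists>\<xi>. continuous_on {a..b} \<xi> \<and> (\<forall>s\<in>{a..b}. \<xi> s = h s + integral {a..s} (\<lambda>r. L r (\<xi> r)))"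
proof -
  define P where "P = rec_nat h (\<lambda>k p s. h s + integral {a..s} (\<lambda>r. L r (p r)))"
  have P0: "P 0 = h" by (simp add: P_def)
  have PS: "\<And>k. P (Suc k) = (\<lambda>s. h s + integral {a..s} (\<lambda>r. L r (P k r)))" by (simp add: P_def)
  have intsub: "\<And>(\<phi>::real\<Rightarrow>'a) s. continuous_on {a..b} \<phi> \<Longrightarrow> s \<in> {a..b} \<Longrightarrow> (\<lambda>r. L r (\<phi> r)) integrable_on {a..s}"
  proof -
    fix \<phi> :: "real\<Rightarrow>'a" and s assume "continuous_on {a..b} \<phi>" "s \<in> {a..b}"
    then show "(\<lambda>r. L r (\<phi> r)) integrable_on {a..s}"
    proof -
      have "{a..s} \<subseteq> {a..b}" using \<open>s \<in> {a..b}\<close> by auto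
      then show ?thesis using integrable_continuous_real[OF continuous_on_subset[OF Lc[OF \<open>continuous_on {a..b} \<phi>\<close>]]] by blast
    qed
  qed
  have cont: "continuous_on {a..b} (P k)" for k
  proof (induction k)
    case 0 then show ?case using hc P0 by simp
  next
    case (Suc k)
    have "continuous_on {a..b} (\<lambda>x. integral {a..x} (\<lambda>r. L r (P k r)))"
      by (rule indefinite_integral_continuous_1[OF integrable_continuous_real[OF Lc[OF Suc]]])
    then show ?case unfolding PS by (intro continuous_on_add hc)
  qed
  define E where "E = exp(2*K*(b-a))"
  have E1: "E \<ge> 1" using ab K by (simp add: E_def)
  have expE: "\<And>s. s \<in> {a..b} \<Longrightarrow> exp(2*K*(s-a)) \<le> E" using K by (auto simp: E_def)
  obtain C where C: "\<And>s. s \<in> {a..b} \<Longrightarrow> norm (P 1 s - P 0 s) \<le> C" and C0: "C \<ge> 0"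
  proof -
    have "bounded ((\<lambda>s. P 1 s - P 0 s) ` {a..b})"
      using compact_continuous_image[OF continuous_on_diff[OF cont cont]] compact_imp_bounded by blast
    then obtain B where "\<forall>x\<in>(\<lambda>s. P 1 s - P 0 s) ` {a..b}. norm x \<le> B" by (auto simp: bounded_iff)
    then have "\<And>s. s \<in> {a..b} \<Longrightarrow> norm (P 1 s - P 0 s) \<le> B" by blast
    then show ?thesis using that[of "max B 0"] by force
  qed
  have diff: "\<forall>s\<in>{a..b}. norm (P (Suc k) s - P k s) \<le> C*(1/2)^k*exp(2*K*(s-a))" for k
  proof (induction k)
    case 0 show ?case
    proof
      fix s assume s: "s \<in> {a..b}"
      have "1 \<le> exp(2*K*(s-a))" using s K by auto
      then have "C \<le> C * exp(2*K*(s-a))" using C0 by (simp add: mult_le_cancel_left1)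
      then show "norm (P (Suc 0) s - P 0 s) \<le> C*(1/2)^0*exp(2*K*(s-a))" using C[OF s] by simp
    qed
  next
    case (Suc k)
    show ?case
    proof
      fix s assume s: "s \<in> {a..b}"
      have i1: "(\<lambda>r. L r (P (Suc k) r)) integrable_on {a..s}" by (rule intsub[OF cont s])
      have i0: "(\<lambda>r. L r (P k r)) integrable_on {a..s}" by (rule intsub[OF cont s])
      have "P (Suc (Suc k)) s - P (Suc k) s = integral {a..s} (\<lambda>r. L r (P (Suc k) r)) - integral {a..s} (\<lambda>r. L r (P k r))"
        by (simp add: PS)
      also have "\<dots> = integral {a..s} (\<lambda>r. L r (P (Suc k) r) - L r (P k r))"
        by (rule integral_diff[OF i1 i0, symmetric])
      finally have eq: "P (Suc (Suc k)) s - P (Suc k) s = integral {a..s} (\<lambda>r. L r (P (Suc k) r) - L r (P k r))" .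
      define g where "g = (\<lambda>r. K*(C*(1/2)^k) * exp (2*K*(r-a)))"
      have hg: "(g has_integral K*(C*(1/2)^k) * ((exp (2*K*(s-a)) - 1)/(2*K))) {a..s}"
        unfolding g_def by (rule has_integral_mult_right[OF exp_integral[OF K]]) (use s in auto)
      have "norm (integral {a..s} (\<lambda>r. L r (P (Suc k) r) - L r (P k r))) \<le> integral {a..s} g"
      proof (rule integral_norm_bound_integral)
        show "(\<lambda>r. L r (P (Suc k) r) - L r (P k r)) integrable_on {a..s}" using i1 i0 by (rule integrable_diff)
        show "g integrable_on {a..s}" using hg by blast
        fix r assume r: "r \<in> {a..s}"
        then have rab: "r \<in> {a..b}" using s by auto
        have "norm (L r (P (Suc k) r) - L r (P k r)) = norm (L r (P (Suc k) r - P k r))"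
          using lin[OF rab] by (simp add: linear_diff)
        also have "\<dots> \<le> K * norm (P (Suc k) r - P k r)" by (rule bnd[OF rab])
        also have "\<dots> \<le> K * (C*(1/2)^k*exp(2*K*(r-a)))"
          using Suc rab K by (intro mult_left_mono) auto
        finally show "norm (L r (P (Suc k) r) - L r (P k r)) \<le> g r" by (simp add: g_def)
      qed
      also have "integral {a..s} g = K*(C*(1/2)^k) * ((exp (2*K*(s-a)) - 1)/(2*K))"
        using hg by (rule integral_unique)
      also have "\<dots> = C*(1/2)^(Suc k)*exp(2*K*(s-a)) - C*(1/2)^(Suc k)" using K by (simp add: field_simps)
      also have "\<dots> \<le> C*(1/2)^(Suc k)*exp(2*K*(s-a))" using C0 by simp
      finally show "norm (P (Suc (Suc k)) s - P (Suc k) s) \<le> C*(1/2)^(Suc k)*exp(2*K*(s-a))" using eq by simp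
    qed
  qed
  have cauchy: "\<forall>s\<in>{a..b}. norm (P (n+j) s - P n s) \<le> 2*C*E*((1/2)^n - (1/2)^(n+j))" for n j
  proof (induction j)
    case 0 then show ?case by simp
  next
    case (Suc j)
    show ?case
    proof
      fix s assume s: "s \<in> {a..b}"
      have "norm (P (n + Suc j) s - P n s) \<le> norm (P (Suc (n+j)) s - P (n+j) s) + norm (P (n+j) s - P n s)"
        using norm_triangle_ineq[of "P (Suc (n+j)) s - P (n+j) s" "P (n+j) s - P n s"] by simp
      also have "\<dots> \<le> C*(1/2)^(n+j)*E + 2*C*E*((1/2)^n - (1/2)^(n+j))"
      proof (rule add_mono)
        have "C*(1/2)^(n+j)*exp(2*K*(s-a)) \<le> C*(1/2)^(n+j)*E" using expE[OF s] C0 by (intro mult_left_mono) auto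
        then show "norm (P (Suc (n+j)) s - P (n+j) s) \<le> C*(1/2)^(n+j)*E" using diff s by (meson order_trans)
        show "norm (P (n+j) s - P n s) \<le> 2*C*E*((1/2)^n - (1/2)^(n+j))" using Suc s by blast
      qed
      also have "\<dots> = 2*C*E*((1/2)^n - (1/2)^(n + Suc j))" by (simp add: algebra_simps)
      finally show "norm (P (n + Suc j) s - P n s) \<le> 2*C*E*((1/2)^n - (1/2)^(n + Suc j))" .
    qed
  qed
  have cauchy2: "norm (P m s - P n s) \<le> 2*C*E*(1/2)^M" if "s \<in> {a..b}" "M \<le> m" "M \<le> n" for m n M s
  proof -
    have gen: "norm (P (n+j) s - P n s) \<le> 2*C*E*(1/2)^M" if "M \<le> n" for n j
    proof -
      have "norm (P (n+j) s - P n s) \<le> 2*C*E*((1/2)^n - (1/2)^(n+j))" using cauchy \<open>s \<in> {a..b}\<close> by blast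
      also have "\<dots> \<le> 2*C*E*(1/2)^n" using C0 E1 by (intro mult_left_mono) auto
      also have "\<dots> \<le> 2*C*E*(1/2)^M" using C0 E1 that by (intro mult_left_mono power_decreasing) auto
      finally show ?thesis .
    qed
    show ?thesis
    proof (cases "n \<le> m")
      case True
      then show ?thesis using gen[OF that(3), of "m-n"] by simp
    next
      case False
      then show ?thesis using gen[OF that(2), of "n-m"] by (simp add: norm_minus_commute)
    qed
  qed
  have "uniformly_Cauchy_on {a..b} P"
    unfolding uniformly_Cauchy_on_def
  proof (intro allI impI)
    fix e :: real assume e: "e > 0"
    obtain M where M: "(1/2::real)^M < e/(2*C*E+1)"
    proof -
      have "2*C*E \<ge> 0" using C0 E1 by simp
      then have "0 < e/(2*C*E+1)" using e by (simp add: add_nonneg_pos)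
      then show ?thesis using real_arch_pow_inv[of "e/(2*C*E+1)" "1/2"] that by auto
    qed
    have "2*C*E*(1/2)^M \<le> (2*C*E+1)*(1/2::real)^M" by simp
    also have "\<dots> < e"
    proof -
      have "2*C*E \<ge> 0" using C0 E1 by simp
      then have pos: "2*C*E+1 > 0" by linarith
      show ?thesis using M pos by (simp add: pos_less_divide_eq mult.commute)
    qed
    finally have Me: "2*C*E*(1/2)^M < e" .
    show "\<exists>M. \<forall>x\<in>{a..b}. \<forall>m\<ge>M. \<forall>n\<ge>M. dist (P m x) (P n x) < e"
    proof (intro exI[of _ M] ballI allI impI)
      fix x m n assume "x \<in> {a..b}" "M \<le> m" "M \<le> n"
      then have "norm (P m x - P n x) \<le> 2*C*E*(1/2)^M" by (rule cauchy2)
      then show "dist (P m x) (P n x) < e" using Me by (simp add: dist_norm)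
    qed
  qed
  then obtain \<xi> where ul: "uniform_limit {a..b} P \<xi> sequentially"
    using Cauchy_uniformly_convergent uniformly_convergent_on_def by blast
  have cxi: "continuous_on {a..b} \<xi>"
    by (rule uniform_limit_theorem[OF always_eventually ul]) (use cont in auto)
  have "\<xi> s = h s + integral {a..s} (\<lambda>r. L r (\<xi> r))" if s: "s \<in> {a..b}" for s
  proof -
    have sub: "{a..s} \<subseteq> {a..b}" using s by auto
    have ul2: "uniform_limit {a..s} (\<lambda>k r. L r (P k r)) (\<lambda>r. L r (\<xi> r)) sequentially"
      unfolding uniform_limit_iff
    proof (intro allI impI)
      fix e :: real assume e: "e > 0"
      have "\<forall>\<^sub>F n in sequentially. \<forall>x\<in>{a..b}. dist (P n x) (\<xi> x) < e/K"
        using ul e K unfolding uniform_limit_iff by auto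
      then show "\<forall>\<^sub>F n in sequentially. \<forall>x\<in>{a..s}. dist (L x (P n x)) (L x (\<xi> x)) < e"
      proof (rule eventually_mono)
        fix n assume H: "\<forall>x\<in>{a..b}. dist (P n x) (\<xi> x) < e/K"
        show "\<forall>x\<in>{a..s}. dist (L x (P n x)) (L x (\<xi> x)) < e"
        proof
          fix x assume "x \<in> {a..s}"
          then have x: "x \<in> {a..b}" using sub by auto
          have "dist (L x (P n x)) (L x (\<xi> x)) = norm (L x (P n x - \<xi> x))"
            using lin[OF x] by (simp add: dist_norm linear_diff)
          also have "\<dots> \<le> K * norm (P n x - \<xi> x)" by (rule bnd[OF x])
          also have "\<dots> < K * (e/K)" using H x K by (intro mult_strict_left_mono) (auto simp: dist_norm)
          also have "\<dots> = e" using K by simp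
          finally show "dist (L x (P n x)) (L x (\<xi> x)) < e" .
        qed
      qed
    qed
    obtain I J where I: "\<And>n. ((\<lambda>r. L r (P n r)) has_integral I n) {a..s}"
      and J: "((\<lambda>r. L r (\<xi> r)) has_integral J) {a..s}" and IJ: "I \<longlonglongrightarrow> J"
      by (rule uniform_limit_integral[OF ul2]) (use continuous_on_subset[OF Lc[OF cont] sub] in auto)
    have "(\<lambda>k. P (Suc k) s) \<longlonglongrightarrow> \<xi> s"
      using tendsto_uniform_limitI[OF ul s] by (rule LIMSEQ_Suc)
    moreover have "(\<lambda>k. P (Suc k) s) = (\<lambda>k. h s + I k)"
      using I by (simp add: PS integral_unique[OF I])
    moreover have "(\<lambda>k. h s + I k) \<longlonglongrightarrow> h s + J" using IJ by (intro tendsto_intros)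
    ultimately have "\<xi> s = h s + J" using LIMSEQ_unique by metis
    then show ?thesis using J integral_unique by metis
  qed
  then show ?thesis using cxi by blast
qed

lemma bilinear_mv: "bilinear (\<lambda>(M::real^'m^'n) (v::real^'m). M *v v)"
  unfolding bilinear_def
  by (auto simp: linear_iff matrix_vector_mult_def vec_eq_iff sum.distrib sum_distrib_left algebra_simps)

lemma bilinear_mm: "bilinear (\<lambda>(M::real^'m^'n) (X::real^'k^'m). M ** X)"
  unfolding bilinear_def
  by (auto simp: linear_iff matrix_matrix_mult_def vec_eq_iff sum.distrib sum_distrib_left algebra_simps)

lemma mv_bound: "\<exists>c>0. \<forall>(M::real^'m^'n) (v::real^'m). norm (M *v v) \<le> c * norm M * norm v"
  using bilinear_bounded_pos[OF bilinear_mv] by (metis mult.commute mult.assoc)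

lemma mm_bound: "\<exists>c>0. \<forall>(M::real^'m^'n) (X::real^'k^'m). norm (M ** X) \<le> c * norm M * norm X"
  using bilinear_bounded_pos[OF bilinear_mm] by (metis mult.commute mult.assoc)

lemma cont_bound:
  fixes f :: "real \<Rightarrow> 'a::real_normed_vector"
  assumes "continuous_on {a..b} f"
  obtains B where "B \<ge> 0" "\<And>r. r \<in> {a..b} \<Longrightarrow> norm (f r) \<le> B"
proof -
  have "bounded (f ` {a..b})" using compact_continuous_image[OF assms] compact_imp_bounded by blast
  then obtain B where "\<forall>x\<in>f ` {a..b}. norm x \<le> B" by (auto simp: bounded_iff)
  then have "\<And>s. s \<in> {a..b} \<Longrightarrow> norm (f s) \<le> B" by blast
  then show ?thesis using that[of "max B 0"] by force
qed

lemma lin_uniq: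
  fixes L :: "real \<Rightarrow> 'a::euclidean_space \<Rightarrow> 'a" and z :: "real \<Rightarrow> 'a"
  assumes ab: "a \<le> b" and K: "K > 0"
   and bnd: "\<And>r x. r \<in> {a..b} \<Longrightarrow> norm (L r x) \<le> K * norm x"
   and Lc: "continuous_on {a..b} (\<lambda>r. L r (z r))"
   and zc: "continuous_on {a..b} z"
   and eq: "\<And>s. s \<in> {a..b} \<Longrightarrow> z s = integral {a..s} (\<lambda>r. L r (z r))"
  shows "\<And>s. s \<in> {a..b} \<Longrightarrow> z s = 0"
proof -
  have phic: "continuous_on {a..b} (\<lambda>r. norm (z r))" using zc by (intro continuous_intros)
  have "norm (z s) \<le> 0 + K * integral {a..s} (\<lambda>r. norm (z r))" if s: "s \<in> {a..b}" for s
  proof -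
    have sub: "{a..s} \<subseteq> {a..b}" using s by auto
    have "norm (z s) \<le> integral {a..s} (\<lambda>r. K * norm (z r))"
      unfolding eq[OF s]
    proof (rule integral_norm_bound_integral)
      show "(\<lambda>r. L r (z r)) integrable_on {a..s}" using integrable_continuous_real[OF continuous_on_subset[OF Lc sub]] .
      show "(\<lambda>r. K * norm (z r)) integrable_on {a..s}"
        using integrable_on_cmult_left[OF integrable_continuous_real[OF continuous_on_subset[OF phic sub]], of K] by simp
      show "\<And>x. x \<in> {a..s} \<Longrightarrow> norm (L x (z x)) \<le> K * norm (z x)" using bnd sub by blast
    qed
    then show ?thesis by simp
  qed
  from gronwall_exp[OF ab K order_refl phic this]
  show "\<And>s. s \<in> {a..b} \<Longrightarrow> z s = 0" by fastforce
qed

lemma fundamental_matrix: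
  fixes A :: "real \<Rightarrow> real^'n^'n"
  assumes Ac: "continuous_on {0..T} A" and T: "0 \<le> T" and t: "t \<in> {0..T}"
  shows "\<exists>Y. Y t = mat 1 \<and> (\<forall>r\<in>{0..T}. (Y has_vector_derivative (A r ** Y r)) (at r within {0..T}))"
proof -
  obtain KA where KA0: "KA \<ge> 0" and KA: "\<And>r. r \<in> {0..T} \<Longrightarrow> norm (A r) \<le> KA"
    using cont_bound[OF Ac] by blast
  obtain c where c: "c > 0" and cb: "\<And>(M::real^'n^'n) (X::real^'n^'n). norm (M ** X) \<le> c * norm M * norm X"
    using mm_bound by blast
  define K where "K = c * KA + 1"
  have K: "K > 0" using c KA0 by (simp add: K_def add_nonneg_pos)
  have bZ: "norm (A r ** X) \<le> K * norm X" if "r \<in> {0..T}" for r and X :: "real^'n^'n"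
  proof -
    have "norm (A r ** X) \<le> c * norm (A r) * norm X" using cb[of "A r" X] by simp
    also have "\<dots> \<le> c * KA * norm X" using KA[OF that] c by (intro mult_right_mono mult_left_mono) auto
    also have "\<dots> \<le> K * norm X" by (simp add: K_def distrib_right)
    finally show ?thesis .
  qed
  have bW: "norm (- (X ** A r)) \<le> K * norm X" if "r \<in> {0..T}" for r and X :: "real^'n^'n"
  proof -
    have "norm (- (X ** A r)) \<le> c * norm X * norm (A r)" using cb by simp
    also have "\<dots> \<le> c * norm X * KA" using KA[OF that] c by (intro mult_left_mono) auto
    also have "\<dots> = c * KA * norm X" by (simp add: mult_ac)
    also have "\<dots> \<le> K * norm X" by (simp add: K_def distrib_right)
    finally show ?thesis .
  qed
  have linZ: "linear (\<lambda>X. A r ** X)" for r :: real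
    using bilinear_mm unfolding bilinear_def by blast
  have linW: "linear (\<lambda>X. - (X ** A r))" for r :: real
  proof -
    have "linear (\<lambda>X. X ** A r)" using bilinear_mm unfolding bilinear_def by blast
    then show ?thesis by (rule linear_compose_neg)
  qed
  have contZ: "continuous_on {0..T} (\<lambda>r. A r ** \<phi> r)" if "continuous_on {0..T} \<phi>" for \<phi> :: "real \<Rightarrow> real^'n^'n"
    using bilinear_continuous_on_compose[OF Ac that bilinear_mm] .
  have contW: "continuous_on {0..T} (\<lambda>r. - (\<phi> r ** A r))" if "continuous_on {0..T} \<phi>" for \<phi> :: "real \<Rightarrow> real^'n^'n"
    using bilinear_continuous_on_compose[OF that Ac bilinear_mm] by (intro continuous_intros)
  obtain Z where Zc: "continuous_on {0..T} Z"
    and Zeq: "\<forall>s\<in>{0..T}. Z s = mat 1 + integral {0..s} (\<lambda>r. A r ** Z r)"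
    using picard[of 0 T K "\<lambda>r X. A r ** X" "\<lambda>_. mat 1", OF T K linZ bZ contZ] by auto
  obtain W where Wc: "continuous_on {0..T} W"
    and Weq: "\<forall>s\<in>{0..T}. W s = mat 1 + integral {0..s} (\<lambda>r. - (W r ** A r))"
    using picard[of 0 T K "\<lambda>r X. - (X ** A r)" "\<lambda>_. mat 1", OF T K linW bW contW] by auto
  have dZ: "(Z has_vector_derivative (A r ** Z r)) (at r within {0..T})" if r: "r \<in> {0..T}" for r
  proof -
    have "((\<lambda>s. integral {0..s} (\<lambda>r. A r ** Z r)) has_vector_derivative (A r ** Z r)) (at r within {0..T})"
      by (rule integral_has_vector_derivative[OF contZ[OF Zc] r])
    from has_vector_derivative_add[OF has_vector_derivative_const[of "mat 1"] this]
    have d: "((\<lambda>s. mat 1 + integral {0..s} (\<lambda>r. A r ** Z r)) has_vector_derivative (A r ** Z r)) (at r within {0..T})" by simp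
    show ?thesis by (rule has_vector_derivative_transform[OF r _ d]) (use Zeq in auto)
  qed
  have dW: "(W has_vector_derivative (- (W r ** A r))) (at r within {0..T})" if r: "r \<in> {0..T}" for r
  proof -
    have "((\<lambda>s. integral {0..s} (\<lambda>r. - (W r ** A r))) has_vector_derivative (- (W r ** A r))) (at r within {0..T})"
      by (rule integral_has_vector_derivative[OF contW[OF Wc] r])
    from has_vector_derivative_add[OF has_vector_derivative_const[of "mat 1"] this]
    have d: "((\<lambda>s. mat 1 + integral {0..s} (\<lambda>r. - (W r ** A r))) has_vector_derivative (- (W r ** A r))) (at r within {0..T})" by simp
    show ?thesis by (rule has_vector_derivative_transform[OF r _ d]) (use Weq in auto)
  qed
  have bb: "bounded_bilinear (\<lambda>(X::real^'n^'n) (Y::real^'n^'n). X ** Y)"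
    using bilinear_conv_bounded_bilinear bilinear_mm by blast
  have "\<exists>C. \<forall>r\<in>{0..T}. W r ** Z r = C"
  proof (rule has_derivative_zero_constant)
    show "convex {0..T}" by simp
    fix r assume r: "r \<in> {0..T}"
    have "((\<lambda>r. W r ** Z r) has_vector_derivative (W r ** (A r ** Z r) + (- (W r ** A r)) ** Z r)) (at r within {0..T})"
      by (rule bounded_bilinear.has_vector_derivative[OF bb dW[OF r] dZ[OF r]])
    moreover have "W r ** (A r ** Z r) + (- (W r ** A r)) ** Z r = 0"
    proof -
      have neg: "(- M) ** N = - (M ** N)" for M N :: "real^'n^'n"
        by (simp add: matrix_matrix_mult_def vec_eq_iff sum_negf)
      show ?thesis by (simp add: neg matrix_mul_assoc)
    qed
    ultimately show "((\<lambda>r. W r ** Z r) has_derivative (\<lambda>h. 0)) (at r within {0..T})"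
      by (simp add: has_vector_derivative_def)
  qed
  then obtain C where C: "\<And>r. r \<in> {0..T} \<Longrightarrow> W r ** Z r = C" by blast
  have "Z 0 = mat 1 + integral {0..0} (\<lambda>r. A r ** Z r)" using Zeq T by simp
  then have Z0: "Z 0 = mat 1" by simp
  have "W 0 = mat 1 + integral {0..0} (\<lambda>r. - (W r ** A r))" using Weq T by simp
  then have W0: "W 0 = mat 1" by simp
  have "W 0 ** Z 0 = C" using C T by simp
  then have "C = mat 1" using Z0 W0 by (simp add: matrix_mul_lid)
  then have WZ: "W t ** Z t = mat 1" using C[OF t] by simp
  then have ZW: "Z t ** W t = mat 1" using matrix_left_right_inverse by blast
  define Y where "Y = (\<lambda>s. Z s ** W t)"
  have "Y t = mat 1" using ZW by (simp add: Y_def)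
  moreover have "(Y has_vector_derivative (A r ** Y r)) (at r within {0..T})" if r: "r \<in> {0..T}" for r
  proof -
    have "((\<lambda>s. Z s ** W t) has_vector_derivative (Z r ** 0 + (A r ** Z r) ** W t)) (at r within {0..T})"
      by (rule bounded_bilinear.has_vector_derivative[OF bb dZ[OF r]]) (rule derivative_intros)
    then show ?thesis by (simp add: Y_def matrix_mul_assoc)
  qed
  ultimately show ?thesis by blast
qed

lemma mv_K:
  fixes M :: "real \<Rightarrow> real^'m^'n"
  assumes "continuous_on {a..b} M"
  obtains K where "K > 0" "\<And>r v. r \<in> {a..b} \<Longrightarrow> norm (M r *v v) \<le> K * norm v"
proof -
  obtain KM where KM0: "KM \<ge> 0" and KM: "\<And>r. r \<in> {a..b} \<Longrightarrow> norm (M r) \<le> KM"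
    using cont_bound[OF assms] by blast
  obtain c where c: "c > 0" and cb: "\<And>(N::real^'m^'n) (v::real^'m). norm (N *v v) \<le> c * norm N * norm v"
    using mv_bound by blast
  show ?thesis
  proof (rule that[of "c * KM + 1"])
    show "c * KM + 1 > 0" using c KM0 by (simp add: add_nonneg_pos)
    fix r v assume r: "r \<in> {a..b}"
    have "norm (M r *v v) \<le> c * norm (M r) * norm v" using cb[of "M r" v] by simp
    also have "\<dots> \<le> c * KM * norm v" using KM[OF r] c by (intro mult_right_mono mult_left_mono) auto
    also have "\<dots> \<le> (c * KM + 1) * norm v" by (simp add: distrib_right)
    finally show "norm (M r *v v) \<le> (c * KM + 1) * norm v" .
  qed
qed

lemma sol_cont:
  fixes g :: "real \<Rightarrow> 'a::euclidean_space"
  assumes ab: "a \<le> b" and hi: "\<And>s. s \<in> {a..b} \<Longrightarrow> (g has_integral (\<xi> s - x)) {a..s}"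
  shows "continuous_on {a..b} \<xi>" and "g integrable_on {a..b}"
    and "\<And>s. s \<in> {a..b} \<Longrightarrow> \<xi> s = x + integral {a..s} g"
proof -
  show gi: "g integrable_on {a..b}" using hi[of b] ab by auto
  show eq: "\<And>s. s \<in> {a..b} \<Longrightarrow> \<xi> s = x + integral {a..s} g"
  proof -
    fix s assume s: "s \<in> {a..b}"
    have "integral {a..s} g = \<xi> s - x" using hi[OF s] by (rule integral_unique)
    then show "\<xi> s = x + integral {a..s} g" by simp
  qed
  have "continuous_on {a..b} (\<lambda>s. x + integral {a..s} g)"
    by (intro continuous_intros indefinite_integral_continuous_1 gi)
  then show "continuous_on {a..b} \<xi>" by (rule continuous_on_eq) (use eq in simp)
qed

lemma lin_sol_exists:
  fixes A :: "real \<Rightarrow> real^'n^'n" and f :: "real \<Rightarrow> real^'n"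
  assumes ab: "a \<le> b" and Ac: "continuous_on {a..b} A" and fi: "f integrable_on {a..b}"
  shows "\<exists>\<xi>. \<xi> a = x \<and> (\<forall>s\<in>{a..b}. ((\<lambda>r. A r *v \<xi> r + f r) has_integral (\<xi> s - x)) {a..s})"
proof -
  obtain K where K: "K > 0" and Kb: "\<And>r v. r \<in> {a..b} \<Longrightarrow> norm (A r *v v) \<le> K * norm v"
    using mv_K[OF Ac] by blast
  have lin: "linear (\<lambda>v. A r *v v)" for r by simp
  have Lc: "continuous_on {a..b} (\<lambda>r. A r *v \<phi> r)" if "continuous_on {a..b} \<phi>" for \<phi> :: "real \<Rightarrow> real^'n"
    using bilinear_continuous_on_compose[OF Ac that bilinear_mv] .
  have hc: "continuous_on {a..b} (\<lambda>s. x + integral {a..s} f)"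
    by (intro continuous_intros indefinite_integral_continuous_1 fi)
  obtain \<xi> where \<xi>c: "continuous_on {a..b} \<xi>"
    and eq: "\<forall>s\<in>{a..b}. \<xi> s = (x + integral {a..s} f) + integral {a..s} (\<lambda>r. A r *v \<xi> r)"
    using picard[of a b K "\<lambda>r v. A r *v v" "\<lambda>s. x + integral {a..s} f", OF ab K lin Kb Lc hc] by auto
  show ?thesis
  proof (intro exI conjI ballI)
    show "\<xi> a = x" using eq ab by auto
    fix s assume s: "s \<in> {a..b}"
    have sub: "{a..s} \<subseteq> {a..b}" using s by auto
    have i1: "((\<lambda>r. A r *v \<xi> r) has_integral integral {a..s} (\<lambda>r. A r *v \<xi> r)) {a..s}"
      using integrable_continuous_real[OF continuous_on_subset[OF Lc[OF \<xi>c] sub]] by (rule integrable_integral)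
    have i2: "(f has_integral integral {a..s} f) {a..s}"
      using integrable_on_subinterval[OF fi sub] by (rule integrable_integral)
    have "((\<lambda>r. A r *v \<xi> r + f r) has_integral (integral {a..s} (\<lambda>r. A r *v \<xi> r) + integral {a..s} f)) {a..s}"
      by (rule has_integral_add[OF i1 i2])
    moreover have "integral {a..s} (\<lambda>r. A r *v \<xi> r) + integral {a..s} f = \<xi> s - x" using eq s by auto
    ultimately show "((\<lambda>r. A r *v \<xi> r + f r) has_integral (\<xi> s - x)) {a..s}" by simp
  qed
qed

lemma lin_sol_uniq:
  fixes A :: "real \<Rightarrow> real^'n^'n" and f :: "real \<Rightarrow> real^'n"
  assumes ab: "a \<le> b" and Ac: "continuous_on {a..b} A"
    and h1: "\<And>s. s \<in> {a..b} \<Longrightarrow> ((\<lambda>r. A r *v \<xi>1 r + f r) has_integral (\<xi>1 s - x)) {a..s}"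
    and h2: "\<And>s. s \<in> {a..b} \<Longrightarrow> ((\<lambda>r. A r *v \<xi>2 r + f r) has_integral (\<xi>2 s - x)) {a..s}"
  shows "\<And>s. s \<in> {a..b} \<Longrightarrow> \<xi>1 s = \<xi>2 s"
proof -
  obtain K where K: "K > 0" and Kb: "\<And>r v. r \<in> {a..b} \<Longrightarrow> norm (A r *v v) \<le> K * norm v"
    using mv_K[OF Ac] by blast
  note c1 = sol_cont[OF ab h1] and c2 = sol_cont[OF ab h2]
  define z where "z = (\<lambda>s. \<xi>1 s - \<xi>2 s)"
  have zc: "continuous_on {a..b} z" unfolding z_def using c1(1) c2(1) by (intro continuous_intros)
  have Lc: "continuous_on {a..b} (\<lambda>r. A r *v z r)"
    using bilinear_continuous_on_compose[OF Ac zc bilinear_mv] .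
  have "z s = integral {a..s} (\<lambda>r. A r *v z r)" if s: "s \<in> {a..b}" for s
  proof -
    have "((\<lambda>r. (A r *v \<xi>1 r + f r) - (A r *v \<xi>2 r + f r)) has_integral ((\<xi>1 s - x) - (\<xi>2 s - x))) {a..s}"
      by (rule has_integral_diff[OF h1[OF s] h2[OF s]])
    moreover have "(\<lambda>r. (A r *v \<xi>1 r + f r) - (A r *v \<xi>2 r + f r)) = (\<lambda>r. A r *v z r)"
      by (auto simp: z_def matrix_vector_mult_diff_distrib)
    ultimately have "((\<lambda>r. A r *v z r) has_integral z s) {a..s}" by (simp add: z_def)
    then show ?thesis by (simp add: integral_unique)
  qed
  from lin_uniq[of a b K "\<lambda>r v. A r *v v" z, OF ab K Kb Lc zc this]
  show "\<And>s. s \<in> {a..b} \<Longrightarrow> \<xi>1 s = \<xi>2 s" by (simp add: z_def)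
qed

lemma state_trans_eq:
  fixes A :: "real \<Rightarrow> real^'n^'n"
  assumes Ac: "continuous_on {0..T} A" and T: "0 \<le> T" and t: "t \<in> {0..T}"
    and Yt: "Y t = mat 1" and dY: "\<forall>r\<in>{0..T}. (Y has_vector_derivative (A r ** Y r)) (at r within {0..T})"
  shows "state_trans A T T t = Y T"
  unfolding state_trans_def
proof (rule the_equality)
  show "\<exists>Y'. Y' t = mat 1 \<and> (\<forall>r\<in>{0..T}. (Y' has_vector_derivative A r ** Y' r) (at r within {0..T})) \<and> Y' T = Y T"
    using Yt dY by blast
  fix M assume "\<exists>Y'. Y' t = mat 1 \<and> (\<forall>r\<in>{0..T}. (Y' has_vector_derivative A r ** Y' r) (at r within {0..T})) \<and> Y' T = M"
  then obtain Y' where Y't: "Y' t = mat 1" and dY': "\<forall>r\<in>{0..T}. (Y' has_vector_derivative A r ** Y' r) (at r within {0..T})"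
    and M: "Y' T = M" by blast
  define D where "D = (\<lambda>s. Y' s - Y s)"
  have sub: "{t..T} \<subseteq> {0..T}" using t by auto
  have Ac': "continuous_on {t..T} A" using continuous_on_subset[OF Ac sub] .
  have dD: "(D has_vector_derivative A r ** D r) (at r within {t..T})" if r: "r \<in> {t..T}" for r
  proof -
    have "(D has_vector_derivative (A r ** Y' r - A r ** Y r)) (at r within {0..T})"
      unfolding D_def using r sub by (intro has_vector_derivative_diff[OF bspec[OF dY'] bspec[OF dY]]) auto
    then have "(D has_vector_derivative A r ** D r) (at r within {0..T})"
    proof -
      have "A r ** Y' r - A r ** Y r = A r ** D r"
        by (simp add: D_def matrix_matrix_mult_def vec_eq_iff sum_subtractf right_diff_distrib)
      then show ?thesis using \<open>(D has_vector_derivative (A r ** Y' r - A r ** Y r)) (at r within {0..T})\<close> by simp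
    qed
    then show ?thesis using has_vector_derivative_within_subset sub by blast
  qed
  have Dc: "continuous_on {t..T} D" using dD by (rule continuous_on_vector_derivative)
  obtain c where c: "c > 0" and cb: "\<And>(N::real^'n^'n) (X::real^'n^'n). norm (N ** X) \<le> c * norm N * norm X"
    using mm_bound by blast
  obtain KA where KA0: "KA \<ge> 0" and KA: "\<And>r. r \<in> {t..T} \<Longrightarrow> norm (A r) \<le> KA"
    using cont_bound[OF Ac'] by blast
  define K where "K = c * KA + 1"
  have K: "K > 0" using c KA0 by (simp add: K_def add_nonneg_pos)
  have bZ: "norm (A r ** X) \<le> K * norm X" if "r \<in> {t..T}" for r and X :: "real^'n^'n"
  proof -
    have "norm (A r ** X) \<le> c * norm (A r) * norm X" using cb[of "A r" X] by simp
    also have "\<dots> \<le> c * KA * norm X" using KA[OF that] c by (intro mult_right_mono mult_left_mono) auto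
    also have "\<dots> \<le> K * norm X" by (simp add: K_def distrib_right)
    finally show ?thesis .
  qed
  have Lc: "continuous_on {t..T} (\<lambda>r. A r ** D r)"
    using bilinear_continuous_on_compose[OF Ac' Dc bilinear_mm] .
  have tT: "t \<le> T" using t by auto
  have "D s = integral {t..s} (\<lambda>r. A r ** D r)" if s: "s \<in> {t..T}" for s
  proof -
    have ts: "t \<le> s" using s by auto
    have "((\<lambda>r. A r ** D r) has_integral (D s - D t)) {t..s}"
    proof (rule fundamental_theorem_of_calculus[OF ts])
      fix x assume x: "x \<in> {t..s}"
      have "{t..s} \<subseteq> {t..T}" using s by auto
      moreover have "x \<in> {t..T}" using x s by auto
      ultimately show "(D has_vector_derivative A x ** D x) (at x within {t..s})"
        using dD has_vector_derivative_within_subset by blast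
    qed
    moreover have "D t = 0" using Y't Yt by (simp add: D_def)
    ultimately show ?thesis by (simp add: integral_unique)
  qed
  from lin_uniq[of t T K "\<lambda>r X. A r ** X" D, OF tT K bZ Lc Dc this]
  have "D T = 0" using tT by auto
  then show "M = Y T" using M by (simp add: D_def)
qed

lemma sub_int:
  fixes f :: "real \<Rightarrow> 'a::euclidean_space"
  assumes hi: "\<And>s. s \<in> {a..b} \<Longrightarrow> (f has_integral F s) {a..s}"
    and s: "a \<le> s1" "s1 \<le> s2" "s2 \<le> b"
  shows "(f has_integral (F s2 - F s1)) {s1..s2}"
proof -
  have i2: "(f has_integral F s2) {a..s2}" using hi s by auto
  have i1: "(f has_integral F s1) {a..s1}" using hi s by auto
  have fi: "f integrable_on {a..s2}" using i2 by blast
  have "integral {a..s1} f + integral {s1..s2} f = integral {a..s2} f"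
    by (rule Henstock_Kurzweil_Integration.integral_combine[OF s(1) s(2) fi])
  then have eq: "integral {s1..s2} f = F s2 - F s1" using integral_unique[OF i1] integral_unique[OF i2]
    by (metis add.commute add_diff_cancel_right')
  have "f integrable_on {s1..s2}" by (rule integrable_on_subinterval[OF fi]) (use s in auto)
  then show ?thesis using eq by (metis integrable_integral)
qed

lemma norm_add_sq:
  fixes x y :: "'a::real_inner"
  shows "(norm (x + y))^2 = (norm x)^2 + 2 * (x \<bullet> y) + (norm y)^2"
  by (simp add: power2_norm_eq_inner inner_add_left inner_add_right inner_commute)

lemma disc_gronwall:
  fixes \<alpha> :: "nat \<Rightarrow> real"
  assumes st: "\<And>j. j < m \<Longrightarrow> \<alpha> (Suc j) \<le> (1+q) * \<alpha> j + q * c"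
    and a0: "\<alpha> 0 = 0" and q: "q \<ge> 0" and c: "c \<ge> 0"
  shows "j \<le> m \<Longrightarrow> \<alpha> j \<le> ((1+q)^j - 1) * c"
proof (induction j)
  case 0 then show ?case using a0 by simp
next
  case (Suc j)
  then have "\<alpha> j \<le> ((1+q)^j - 1) * c" by simp
  then have "(1+q) * \<alpha> j \<le> (1+q) * (((1+q)^j - 1) * c)" using q by (intro mult_left_mono) auto
  then have "\<alpha> (Suc j) \<le> (1+q) * (((1+q)^j - 1) * c) + q * c" using st[of j] Suc by simp
  also have "\<dots> = ((1+q)^Suc j - 1) * c" by (simp add: algebra_simps)
  finally show ?case .
qed

lemma apriori:
  fixes A :: "real \<Rightarrow> real^'n^'n" and Wf :: "real \<Rightarrow> real^'n" and F :: "real \<Rightarrow> real^'n"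
  assumes ab: "a \<le> b"
    and sol: "\<And>s. s \<in> {a..b} \<Longrightarrow> ((\<lambda>r. A r *v Wf r + F r) has_integral Wf s) {a..s}"
    and KA: "KA > 0" and KAb: "\<And>r v. r \<in> {a..b} \<Longrightarrow> norm (A r *v v) \<le> KA * norm v"
    and Fb: "\<And>r. r \<in> {a..b} \<Longrightarrow> norm (F r) \<le> CF" and CF: "CF \<ge> 0"
  shows "continuous_on {a..b} Wf"
    and "\<And>s. s \<in> {a..b} \<Longrightarrow> norm (Wf s) \<le> 2*(CF*(b-a))*exp(2*KA*(b-a))"
proof -
  have sol': "\<And>s. s \<in> {a..b} \<Longrightarrow> ((\<lambda>r. A r *v Wf r + F r) has_integral (Wf s - 0)) {a..s}" using sol by simp
  note sc = sol_cont[OF ab sol']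
  show Wc: "continuous_on {a..b} Wf" using sc(1) .
  have phic: "continuous_on {a..b} (\<lambda>r. norm (Wf r))" using Wc by (intro continuous_intros)
  have le: "norm (Wf s) \<le> CF*(b-a) + KA * integral {a..s} (\<lambda>r. norm (Wf r))" if s: "s \<in> {a..b}" for s
  proof -
    have sub: "{a..s} \<subseteq> {a..b}" using s by auto
    have ni: "(\<lambda>r. norm (Wf r)) integrable_on {a..s}"
      using integrable_continuous_real[OF continuous_on_subset[OF phic sub]] .
    have hc: "((\<lambda>r. CF) has_integral (s-a)*CF) {a..s}"
      using has_integral_const_real[of CF a s] s by (simp add: content_real)
    have hi: "((\<lambda>r. KA * norm (Wf r) + CF) has_integral (KA * integral {a..s} (\<lambda>r. norm (Wf r)) + (s-a)*CF)) {a..s}"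
      by (intro has_integral_add has_integral_mult_right integrable_integral ni hc)
    have "norm (Wf s) \<le> integral {a..s} (\<lambda>r. KA * norm (Wf r) + CF)"
    proof -
      have "norm (integral {a..s} (\<lambda>r. A r *v Wf r + F r)) \<le> integral {a..s} (\<lambda>r. KA * norm (Wf r) + CF)"
      proof (rule integral_norm_bound_integral)
        show "(\<lambda>r. A r *v Wf r + F r) integrable_on {a..s}" using sol[OF s] by blast
        show "(\<lambda>r. KA * norm (Wf r) + CF) integrable_on {a..s}" using hi by blast
        fix r assume "r \<in> {a..s}"
        then have r: "r \<in> {a..b}" using sub by auto
        have "norm (A r *v Wf r + F r) \<le> norm (A r *v Wf r) + norm (F r)" by (rule norm_triangle_ineq)
        also have "\<dots> \<le> KA * norm (Wf r) + CF" using KAb[OF r, of "Wf r"] Fb[OF r] by simp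
        finally show "norm (A r *v Wf r + F r) \<le> KA * norm (Wf r) + CF" .
      qed
      then show ?thesis using integral_unique[OF sol[OF s]] by simp
    qed
    also have "\<dots> = KA * integral {a..s} (\<lambda>r. norm (Wf r)) + (s-a) * CF"
      using integral_unique[OF hi] by simp
    also have "\<dots> \<le> KA * integral {a..s} (\<lambda>r. norm (Wf r)) + CF*(b-a)"
      using s CF by (simp add: mult.commute mult_left_mono)
    finally show ?thesis by simp
  qed
  have CFab: "CF*(b-a) \<ge> 0" using CF ab by simp
  show "\<And>s. s \<in> {a..b} \<Longrightarrow> norm (Wf s) \<le> 2*(CF*(b-a))*exp(2*KA*(b-a))"
  proof -
    fix s assume s: "s \<in> {a..b}"
    have "norm (Wf s) \<le> 2*(CF*(b-a))*exp(2*KA*(s-a))"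
      using gronwall_exp[OF ab KA CFab phic le s] .
    also have "\<dots> \<le> 2*(CF*(b-a))*exp(2*KA*(b-a))" using s KA CFab by (intro mult_left_mono) auto
    finally show "norm (Wf s) \<le> 2*(CF*(b-a))*exp(2*KA*(b-a))" .
  qed
qed

lemma steer_m:
  fixes A :: "real \<Rightarrow> real^'n^'n" and B :: "real \<Rightarrow> real^'m^'n" and U :: "(real^'m) set"
    and Wf :: "(real \<Rightarrow> real^'m) \<Rightarrow> real \<Rightarrow> real^'n" and G :: "(real \<Rightarrow> real^'m) \<Rightarrow> real \<Rightarrow> real^'n"
    and m :: nat
  assumes ab: "a < b" and m: "m \<ge> 1"
    and Uc: "compact U" and Une: "U \<noteq> {}"
    and Bc: "continuous_on {a..b} B"
    and sol: "\<And>u s. u \<in> meas_maps U a b \<Longrightarrow> s \<in> {a..b} \<Longrightarrow>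
                ((\<lambda>r. A r *v Wf u r + (B r *v u r + G u r)) has_integral Wf u s) {a..s}"
    and Gw: "\<And>u r. u \<in> meas_maps U a b \<Longrightarrow> r \<in> {a..b} \<Longrightarrow> \<exists>c\<in>U. B r *v c + G u r = 0"
    and na: "\<And>u1 u2 s. u1 \<in> meas_maps U a b \<Longrightarrow> u2 \<in> meas_maps U a b \<Longrightarrow> s \<in> {a..b} \<Longrightarrow>
                (\<forall>r. a \<le> r \<and> r < s \<longrightarrow> u1 r = u2 r) \<Longrightarrow> Wf u1 s = Wf u2 s"
    and KA: "KA > 0" and KAb: "\<And>r v. r \<in> {a..b} \<Longrightarrow> norm (A r *v v) \<le> KA * norm v"
    and RU: "\<And>c. c \<in> U \<Longrightarrow> norm c \<le> RU"
    and Fb: "\<And>u r. u \<in> meas_maps U a b \<Longrightarrow> r \<in> {a..b} \<Longrightarrow> norm (B r *v u r + G u r) \<le> CF"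
    and Rwb: "\<And>u s. u \<in> meas_maps U a b \<Longrightarrow> s \<in> {a..b} \<Longrightarrow> norm (Wf u s) \<le> Rw"
    and eta: "\<And>r1 r2 c. r1 \<in> {a..b} \<Longrightarrow> r2 \<in> {a..b} \<Longrightarrow> \<bar>r1 - r2\<bar> \<le> (b-a)/m \<Longrightarrow>
                norm ((B r1 - B r2) *v c) \<le> \<eta> * norm c"
    and eta0: "\<eta> \<ge> 0" and Rw0: "Rw \<ge> 0" and CF0: "CF \<ge> 0" and RU0: "RU \<ge> 0"
  shows "\<exists>u\<in>meas_maps U a b. (norm (Wf u b))^2 \<le>
           exp(2*KA*(b-a)) * (((b-a)/m) * (2*KA*Rw*(KA*Rw+CF) + (KA*Rw+CF)^2) + 4*Rw*RU*\<eta>) / (2*KA)"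
proof -
  define h where "h = (b-a)/m"
  have h0: "h > 0" using ab m by (simp add: h_def)
  define s where "s = (\<lambda>j::nat. a + real j * h)"
  define G0 where "G0 = KA*Rw + CF"
  have G00: "G0 \<ge> 0" using KA Rw0 CF0 by (simp add: G0_def)
  have sm: "s m = b" using m by (simp add: s_def h_def)
  have sS: "s (Suc j) = s j + h" for j by (simp add: s_def algebra_simps)
  have s_in: "s j \<in> {a..b}" if "j \<le> m" for j
  proof -
    have "real j * h \<le> real m * h" using that h0 by (intro mult_right_mono) auto
    then show ?thesis using h0 sm by (auto simp: s_def)
  qed
  define idx where "idx = (\<lambda>r. min (m-1) (nat \<lfloor>(r-a)/h\<rfloor>))"
  have idx_in: "idx r = j" if "j < m" "s j \<le> r" "r < s (Suc j)" for j r
  proof -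
    have "real j \<le> (r-a)/h" using that(2) h0 by (simp add: s_def field_simps)
    moreover have "(r-a)/h < real j + 1" using that(3) h0 by (simp add: s_def field_simps)
    ultimately have "\<lfloor>(r-a)/h\<rfloor> = int j" by (simp add: floor_eq_iff)
    then show ?thesis using that(1) by (simp add: idx_def)
  qed
  have idx_lt: "idx r < j" if "a \<le> r" "r < s j" for j r
  proof -
    have "(r-a)/h < real j" using that(2) h0 by (simp add: s_def field_simps)
    moreover have "0 \<le> (r-a)/h" using that(1) h0 by simp
    ultimately have "nat \<lfloor>(r-a)/h\<rfloor> < j" by linarith
    then show ?thesis by (simp add: idx_def)
  qed
  have idx_m: "idx r < m" for r using m by (simp add: idx_def)
  define pc where "pc = (\<lambda>(c::nat \<Rightarrow> real^'m) r. c (idx r))"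
  have pc_meas: "pc c \<in> meas_maps U a b" if cU: "\<And>k. c k \<in> U" for c
  proof -
    have "(\<lambda>r::real. c (min (m-1) (nat \<lfloor>(r - a)/h\<rfloor>))) \<in> borel_measurable borel"
      by measurable
    then have "(\<lambda>r::real. c (min (m-1) (nat \<lfloor>(r - a)/h\<rfloor>))) \<in> borel_measurable (lebesgue_on {a..b})"
      by (intro measurable_restrict_space1 measurable_completion) simp
    then have "pc c measurable_on {a..b}"
      by (simp add: measurable_on_iff_borel_measurable pc_def idx_def)
    then show ?thesis using cU by (simp add: meas_maps_def pc_def)
  qed
  define sel where "sel = (\<lambda>j p. SOME c. c \<in> U \<and> (\<forall>c'\<in>U. p \<bullet> (B (s j) *v c) \<le> p \<bullet> (B (s j) *v c')))"
  have sel_prop: "sel j p \<in> U \<and> (\<forall>c'\<in>U. p \<bullet> (B (s j) *v sel j p) \<le> p \<bullet> (B (s j) *v c'))" for j p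
  proof -
    have "continuous_on U (\<lambda>c. p \<bullet> (B (s j) *v c))" by (intro continuous_intros)
    then have "\<exists>c\<in>U. \<forall>c'\<in>U. p \<bullet> (B (s j) *v c) \<le> p \<bullet> (B (s j) *v c')"
      using continuous_attains_inf[OF Uc Une] by blast
    then show ?thesis unfolding sel_def by (rule someI2_bex) blast
  qed
  obtain c0 where c0: "c0 \<in> U" using Une by blast
  define cs where "cs = rec_nat (\<lambda>_. c0) (\<lambda>j cj. cj(j := sel j (Wf (pc cj) (s j))))"
  have cs0: "cs 0 = (\<lambda>_. c0)" by (simp add: cs_def)
  have csS: "cs (Suc j) = (cs j)(j := sel j (Wf (pc (cs j)) (s j)))" for j by (simp add: cs_def)
  have cs_U: "cs j k \<in> U" for j k
  proof (induction j)
    case 0 then show ?case using c0 by (simp add: cs0)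
  next
    case (Suc j) then show ?case using sel_prop by (simp add: csS)
  qed
  have cs_stable: "cs (j + i) k = cs j k" if "k < j" for i j k
    using that by (induction i) (auto simp: csS)
  define u where "u = pc (cs m)"
  have u_meas: "u \<in> meas_maps U a b" unfolding u_def by (rule pc_meas[OF cs_U])
  have u_key: "u r = sel j (Wf u (s j))" if j: "j < m" and r: "s j \<le> r" "r < s (Suc j)" for j r
  proof -
    have "u r = cs m j" using idx_in[OF j r] by (simp add: u_def pc_def)
    also have "cs m j = cs (Suc j) j" using cs_stable[of j "Suc j" "m - Suc j"] j by simp
    also have "\<dots> = sel j (Wf (pc (cs j)) (s j))" by (simp add: csS)
    also have "Wf (pc (cs j)) (s j) = Wf u (s j)"
    proof (rule na[OF pc_meas[OF cs_U] u_meas s_in])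
      show "j \<le> m" using j by simp
      show "\<forall>r. a \<le> r \<and> r < s j \<longrightarrow> pc (cs j) r = u r"
      proof (intro allI impI)
        fix r assume "a \<le> r \<and> r < s j"
        then have "idx r < j" using idx_lt by blast
        then have "cs m (idx r) = cs j (idx r)" using cs_stable[of "idx r" j "m - j"] j by simp
        then show "pc (cs j) r = u r" by (simp add: u_def pc_def)
      qed
    qed
    finally show ?thesis .
  qed
  have lip: "norm (Wf u s2 - Wf u s1) \<le> G0 * (s2 - s1)" if "a \<le> s1" "s1 \<le> s2" "s2 \<le> b" for s1 s2
  proof -
    have hI: "((\<lambda>r. A r *v Wf u r + (B r *v u r + G u r)) has_integral (Wf u s2 - Wf u s1)) {s1..s2}"
      by (rule sub_int[OF sol[OF u_meas] that])
    have hc: "((\<lambda>r. G0) has_integral (s2-s1)*G0) {s1..s2}"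
      using has_integral_const_real[of G0 s1 s2] that by (simp add: content_real)
    have "norm (Wf u s2 - Wf u s1) = norm (integral {s1..s2} (\<lambda>r. A r *v Wf u r + (B r *v u r + G u r)))"
      using integral_unique[OF hI] by simp
    also have "\<dots> \<le> integral {s1..s2} (\<lambda>r. G0)"
    proof (rule integral_norm_bound_integral)
      show "(\<lambda>r. A r *v Wf u r + (B r *v u r + G u r)) integrable_on {s1..s2}" using hI by blast
      show "(\<lambda>r. G0) integrable_on {s1..s2}" using hc by blast
      fix r assume "r \<in> {s1..s2}"
      then have r: "r \<in> {a..b}" using that by auto
      have "norm (A r *v Wf u r + (B r *v u r + G u r)) \<le> norm (A r *v Wf u r) + norm (B r *v u r + G u r)"
        by (rule norm_triangle_ineq)
      also have "\<dots> \<le> KA * norm (Wf u r) + CF" using KAb[OF r, of "Wf u r"] Fb[OF u_meas r] by simp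
      also have "\<dots> \<le> KA * Rw + CF" using Rwb[OF u_meas r] KA by simp
      finally show "norm (A r *v Wf u r + (B r *v u r + G u r)) \<le> G0" by (simp add: G0_def)
    qed
    also have "\<dots> = (s2-s1)*G0" using integral_unique[OF hc] .
    finally have "norm (Wf u s2 - Wf u s1) \<le> (s2-s1)*G0" .
    then show ?thesis by (simp add: mult.commute)
  qed
  define \<epsilon>1 where "\<epsilon>1 = h * (2*KA*Rw*G0 + G0^2) + 4*Rw*RU*\<eta>"
  have e10: "\<epsilon>1 \<ge> 0" using h0 KA Rw0 G00 RU0 eta0 by (simp add: \<epsilon>1_def)
  have step: "(norm (Wf u (s (Suc j))))^2 \<le> (1 + 2*KA*h) * (norm (Wf u (s j)))^2 + (2*KA*h) * (\<epsilon>1/(2*KA))"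
    if j: "j < m" for j
  proof -
    define p where "p = Wf u (s j)"
    define \<Delta> where "\<Delta> = Wf u (s (Suc j)) - p"
    have sjm: "s j \<in> {a..b}" "s (Suc j) \<in> {a..b}" using s_in[of j] s_in[of "Suc j"] j by auto
    have sj: "a \<le> s j" "s j \<le> s (Suc j)" "s (Suc j) \<le> b" using sjm sS h0 by auto
    define I where "I = (\<lambda>r. A r *v Wf u r + (B r *v u r + G u r))"
    have hI: "(I has_integral \<Delta>) {s j..s (Suc j)}" unfolding I_def \<Delta>_def p_def by (rule sub_int[OF sol[OF u_meas] sj])
    have hIp: "((\<lambda>r. p \<bullet> I r) has_integral p \<bullet> \<Delta>) {s j..s (Suc j)}"
      using has_integral_linear[OF hI bounded_linear_inner_right[of p]] by (simp add: o_def)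
    define \<beta> where "\<beta> = KA * (norm p)^2 + KA*Rw*G0*h + 2*Rw*RU*\<eta>"
    have np: "norm p \<le> Rw" using Rwb[OF u_meas sjm(1)] by (simp add: p_def)
    have pw: "p \<bullet> I r \<le> \<beta>" if r: "s j \<le> r" "r < s (Suc j)" for r
    proof -
      have rab: "r \<in> {a..b}" using r sj by auto
      have "norm (Wf u r - p) \<le> G0 * (r - s j)" unfolding p_def by (rule lip) (use r sj in auto)
      also have "\<dots> \<le> G0 * h" using r sS G00 by (intro mult_left_mono) auto
      finally have nw: "norm (Wf u r) \<le> norm p + G0*h" using norm_triangle_sub[of "Wf u r" p] by linarith
      have t1: "p \<bullet> (A r *v Wf u r) \<le> KA * (norm p)^2 + KA*Rw*G0*h"
      proof -
        have "p \<bullet> (A r *v Wf u r) \<le> norm p * norm (A r *v Wf u r)" by (rule norm_cauchy_schwarz)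
        also have "\<dots> \<le> norm p * (KA * norm (Wf u r))" using KAb[OF rab, of "Wf u r"] by (intro mult_left_mono) auto
        also have "\<dots> \<le> norm p * (KA * (norm p + G0*h))" using nw KA by (intro mult_left_mono) auto
        also have "\<dots> = KA * (norm p)^2 + KA * norm p * (G0 * h)" by (simp add: algebra_simps power2_eq_square)
        also have "\<dots> \<le> KA * (norm p)^2 + KA * Rw * (G0 * h)"
        proof -
          have "KA * norm p * (G0 * h) \<le> KA * Rw * (G0 * h)"
            using np KA G00 h0 by (intro mult_right_mono mult_left_mono) auto
          then show ?thesis by simp
        qed
        finally show ?thesis by (simp add: mult.assoc)
      qed
      have t2: "p \<bullet> (B r *v u r + G u r) \<le> 2*Rw*RU*\<eta>"
      proof -
        obtain c' where c'U: "c' \<in> U" and c'eq: "B r *v c' + G u r = 0" using Gw[OF u_meas rab] by blast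
        define cj where "cj = sel j p"
        have ur: "u r = cj" using u_key[OF j r] by (simp add: cj_def p_def)
        have cjU: "cj \<in> U" using sel_prop by (simp add: cj_def)
        have cjmin: "p \<bullet> (B (s j) *v cj) \<le> p \<bullet> (B (s j) *v c')" using sel_prop c'U by (simp add: cj_def)
        have Geq: "G u r = - (B r *v c')" using c'eq by (simp add: eq_neg_iff_add_eq_0 add.commute)
        have "B r *v u r + G u r = B r *v (cj - c')" using Geq ur by (simp add: matrix_vector_mult_diff_distrib)
        also have "\<dots> = B (s j) *v (cj - c') + (B r - B (s j)) *v (cj - c')" by (simp add: matrix_vector_mult_diff_rdistrib)
        finally have eqn: "B r *v u r + G u r = B (s j) *v (cj - c') + (B r - B (s j)) *v (cj - c')" .
        have i1: "p \<bullet> (B (s j) *v (cj - c')) \<le> 0" using cjmin by (simp add: matrix_vector_mult_diff_distrib inner_diff_right)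
        have "\<bar>r - s j\<bar> \<le> (b-a)/m" using r sS by (simp add: h_def)
        then have bnd: "norm ((B r - B (s j)) *v (cj - c')) \<le> \<eta> * norm (cj - c')" by (rule eta[OF rab sjm(1)])
        have ncc: "norm (cj - c') \<le> 2*RU"
          using norm_triangle_ineq4[of cj c'] RU[OF cjU] RU[OF c'U] by linarith
        have "p \<bullet> ((B r - B (s j)) *v (cj - c')) \<le> norm p * norm ((B r - B (s j)) *v (cj - c'))" by (rule norm_cauchy_schwarz)
        also have "\<dots> \<le> norm p * (\<eta> * norm (cj - c'))" using bnd by (intro mult_left_mono) auto
        also have "\<dots> \<le> Rw * (\<eta> * (2*RU))" using np ncc eta0 Rw0 by (intro mult_mono mult_left_mono) auto
        finally have i2: "p \<bullet> ((B r - B (s j)) *v (cj - c')) \<le> Rw * (\<eta> * (2*RU))" .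
        have "p \<bullet> (B r *v u r + G u r) = p \<bullet> (B (s j) *v (cj - c')) + p \<bullet> ((B r - B (s j)) *v (cj - c'))"
          by (simp only: eqn inner_add_right)
        then show ?thesis using i1 i2 by (simp add: mult_ac)
      qed
      show ?thesis using t1 t2 by (simp add: I_def \<beta>_def inner_add_right)
    qed
    have pD: "p \<bullet> \<Delta> \<le> h * \<beta>"
    proof -
      have hsp: "((\<lambda>r. if r = s (Suc j) then \<beta> else p \<bullet> I r) has_integral p \<bullet> \<Delta>) {s j..s (Suc j)}"
        by (rule has_integral_spike_finite[OF _ _ hIp, of "{s (Suc j)}"]) auto
      have hc: "((\<lambda>r. \<beta>) has_integral h*\<beta>) {s j..s (Suc j)}"
        using has_integral_const_real[of \<beta> "s j" "s (Suc j)"] sj sS by (simp add: content_real)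
      show ?thesis by (rule has_integral_le[OF hsp hc]) (use pw in auto)
    qed
    have nD: "norm \<Delta> \<le> G0 * h" using lip[OF sj] sS by (simp add: \<Delta>_def p_def)
    have "(norm (Wf u (s (Suc j))))^2 = (norm (p + \<Delta>))^2" by (simp add: \<Delta>_def)
    also have "\<dots> = (norm p)^2 + 2*(p \<bullet> \<Delta>) + (norm \<Delta>)^2" by (rule norm_add_sq)
    also have "\<dots> \<le> (norm p)^2 + 2*(h*\<beta>) + (G0*h)^2"
      using pD nD by (intro add_mono power_mono) auto
    also have "\<dots> = (1 + 2*KA*h) * (norm p)^2 + (2*KA*h) * (\<epsilon>1/(2*KA))"
      using KA by (simp add: \<beta>_def \<epsilon>1_def field_simps power2_eq_square)
    finally show ?thesis by (simp add: p_def)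
  qed
  have w0: "Wf u (s 0) = 0"
  proof -
    have "((\<lambda>r. A r *v Wf u r + (B r *v u r + G u r)) has_integral Wf u a) {a..a}"
      using sol[OF u_meas, of a] ab by simp
    then show ?thesis using has_integral_unique[OF _ has_integral_refl(1)] by (simp add: s_def)
  qed
  have disc: "(norm (Wf u (s m)))^2 \<le> ((1 + 2*KA*h)^m - 1) * (\<epsilon>1/(2*KA))"
    by (rule disc_gronwall[of m "\<lambda>j. (norm (Wf u (s j)))^2" "2*KA*h" "\<epsilon>1/(2*KA)", OF step])
       (use KA h0 e10 w0 in auto)
  have "(1 + 2*KA*h)^m \<le> exp(2*KA*h)^m" using KA h0 by (intro power_mono) auto
  also have "\<dots> = exp(real m * (2*KA*h))" by (rule exp_of_nat_mult[symmetric])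
  also have "real m * (2*KA*h) = 2*KA*(b-a)" using m by (simp add: h_def)
  finally have pw: "(1 + 2*KA*h)^m \<le> exp(2*KA*(b-a))" .
  have "(norm (Wf u b))^2 \<le> ((1 + 2*KA*h)^m - 1) * (\<epsilon>1/(2*KA))" using disc sm by simp
  also have "\<dots> \<le> exp(2*KA*(b-a)) * (\<epsilon>1/(2*KA))"
    using pw KA e10 by (intro mult_right_mono) auto
  also have "\<dots> = exp(2*KA*(b-a)) * (((b-a)/m) * (2*KA*Rw*(KA*Rw+CF) + (KA*Rw+CF)^2) + 4*Rw*RU*\<eta>) / (2*KA)"
    by (simp add: \<epsilon>1_def h_def G0_def)
  finally show ?thesis using u_meas by blast
qed

lemma steer:
  fixes A :: "real \<Rightarrow> real^'n^'n" and B :: "real \<Rightarrow> real^'m^'n" and U :: "(real^'m) set"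
    and Wf :: "(real \<Rightarrow> real^'m) \<Rightarrow> real \<Rightarrow> real^'n" and G :: "(real \<Rightarrow> real^'m) \<Rightarrow> real \<Rightarrow> real^'n"
  assumes ab: "a \<le> b"
    and Uc: "compact U" and Une: "U \<noteq> {}"
    and Ac: "continuous_on {a..b} A" and Bc: "continuous_on {a..b} B"
    and sol: "\<And>u s. u \<in> meas_maps U a b \<Longrightarrow> s \<in> {a..b} \<Longrightarrow>
                ((\<lambda>r. A r *v Wf u r + (B r *v u r + G u r)) has_integral Wf u s) {a..s}"
    and Gb: "\<And>u r. u \<in> meas_maps U a b \<Longrightarrow> r \<in> {a..b} \<Longrightarrow> norm (G u r) \<le> CG"
    and Gw: "\<And>u r. u \<in> meas_maps U a b \<Longrightarrow> r \<in> {a..b} \<Longrightarrow> \<exists>c\<in>U. B r *v c + G u r = 0"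
    and na: "\<And>u1 u2 s. u1 \<in> meas_maps U a b \<Longrightarrow> u2 \<in> meas_maps U a b \<Longrightarrow> s \<in> {a..b} \<Longrightarrow>
                (\<forall>r. a \<le> r \<and> r < s \<longrightarrow> u1 r = u2 r) \<Longrightarrow> Wf u1 s = Wf u2 s"
    and e: "\<epsilon> > 0"
  shows "\<exists>u\<in>meas_maps U a b. norm (Wf u b) \<le> \<epsilon>"
proof (cases "a = b")
  case True
  obtain c0 where c0: "c0 \<in> U" using Une by blast
  have um: "(\<lambda>_. c0) \<in> meas_maps U a b" using c0 by (simp add: meas_maps_def)
  have "((\<lambda>r. A r *v Wf (\<lambda>_. c0) r + (B r *v c0 + G (\<lambda>_. c0) r)) has_integral Wf (\<lambda>_. c0) b) {a..b}"
    using sol[OF um, of b] ab by simp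
  then have "Wf (\<lambda>_. c0) b = 0" using True has_integral_unique[OF _ has_integral_refl(1)] by simp
  then show ?thesis using um e by force
next
  case False
  then have ab': "a < b" using ab by simp
  obtain KA where KA: "KA > 0" and KAb: "\<And>r v. r \<in> {a..b} \<Longrightarrow> norm (A r *v v) \<le> KA * norm v"
    using mv_K[OF Ac] by blast
  obtain KB where KB: "KB > 0" and KBb: "\<And>r v. r \<in> {a..b} \<Longrightarrow> norm (B r *v v) \<le> KB * norm v"
    using mv_K[OF Bc] by blast
  obtain RU where RU0: "RU \<ge> 0" and RU: "\<And>c. c \<in> U \<Longrightarrow> norm c \<le> RU"
  proof -
    obtain R where "\<forall>x\<in>U. norm x \<le> R" using compact_imp_bounded[OF Uc] by (auto simp: bounded_iff)
    then show ?thesis using that[of "max R 0"] by force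
  qed
  define CF where "CF = KB*RU + max CG 0"
  have CF0: "CF \<ge> 0" using KB RU0 by (simp add: CF_def)
  have Fb: "norm (B r *v u r + G u r) \<le> CF" if u: "u \<in> meas_maps U a b" and r: "r \<in> {a..b}" for u r
  proof -
    have urU: "u r \<in> U" using u r by (auto simp: meas_maps_def)
    have "norm (B r *v u r + G u r) \<le> norm (B r *v u r) + norm (G u r)" by (rule norm_triangle_ineq)
    also have "\<dots> \<le> KB * norm (u r) + CG" using KBb[OF r, of "u r"] Gb[OF u r] by simp
    also have "\<dots> \<le> KB * RU + max CG 0"
    proof -
      have "KB * norm (u r) \<le> KB * RU" using RU[OF urU] KB by (intro mult_left_mono) auto
      moreover have "CG \<le> max CG 0" by simp
      ultimately show ?thesis by linarith
    qed
    finally show ?thesis by (simp add: CF_def)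
  qed
  define Rw where "Rw = 2*(CF*(b-a))*exp(2*KA*(b-a))"
  have Rw0: "Rw \<ge> 0" using CF0 ab by (simp add: Rw_def)
  have Rwb: "norm (Wf u s) \<le> Rw" if u: "u \<in> meas_maps U a b" and s: "s \<in> {a..b}" for u s
    unfolding Rw_def
    by (rule apriori(2)[of a b A "Wf u" "\<lambda>r. B r *v u r + G u r", OF ab sol[OF u] KA KAb Fb[OF u] CF0 s])
  define X where "X = 2*KA*Rw*(KA*Rw+CF) + (KA*Rw+CF)^2"
  have X0: "X \<ge> 0" using KA Rw0 CF0 by (simp add: X_def)
  define E2 where "E2 = exp(2*KA*(b-a))/(2*KA)"
  have E20: "E2 > 0" using KA by (simp add: E2_def)
  define \<eta> where "\<eta> = \<epsilon>^2/(2*E2*(4*Rw*RU+1))"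
  have RR: "4*Rw*RU \<ge> 0" using Rw0 RU0 by simp
  have eta0: "\<eta> > 0"
  proof -
    have "4*Rw*RU+1 > 0" using RR by linarith
    then have "2*E2*(4*Rw*RU+1) > 0" using E20 by simp
    moreover have "\<epsilon>^2 > 0" using e by simp
    ultimately show ?thesis unfolding \<eta>_def by (rule divide_pos_pos[rotated])
  qed
  have eta_b: "E2 * (4*Rw*RU*\<eta>) \<le> \<epsilon>^2/2"
  proof -
    have P1: "4*Rw*RU+1 > 0" using RR by linarith
    have "E2 * (4*Rw*RU*\<eta>) = (\<epsilon>^2/2) * (4*Rw*RU/(4*Rw*RU+1))"
    proof -
      have gen: "E * (P * (q/(2*E*(P+1)))) = (q/2) * (P/(P+1))" if "E > 0" "P+1 > 0" for E P q :: real
      proof -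
        have ne: "E \<noteq> 0" using that by simp
        have "E * (P * (q/(2*E*(P+1)))) = (E*(P*q))/(E*(2*(P+1)))" by (simp add: mult_ac)
        also have "\<dots> = (P*q)/(2*(P+1))" using ne by (rule mult_divide_mult_cancel_left)
        also have "\<dots> = (q/2) * (P/(P+1))" by simp
        finally show ?thesis .
      qed
      show ?thesis unfolding \<eta>_def using gen[OF E20 P1, of "\<epsilon>^2"] by (simp add: mult.assoc)
    qed
    also have "\<dots> \<le> (\<epsilon>^2/2) * 1"
    proof (rule mult_left_mono)
      have "4*Rw*RU+1 > 0" using RR by linarith
      then show "4*Rw*RU/(4*Rw*RU+1) \<le> 1" by (simp add: divide_le_eq)
    qed simp
    finally show ?thesis by simp
  qed
  obtain cmv where cmv: "cmv > 0" and cmvb: "\<And>(N::real^'m^'n) (v::real^'m). norm (N *v v) \<le> cmv * norm N * norm v"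
    using mv_bound by blast
  have "uniformly_continuous_on {a..b} B" using compact_uniformly_continuous[OF Bc compact_Icc] .
  then obtain d where d: "d > 0" and dB: "\<And>x x'. x \<in> {a..b} \<Longrightarrow> x' \<in> {a..b} \<Longrightarrow> dist x' x < d \<Longrightarrow> dist (B x') (B x) < \<eta>/cmv"
    unfolding uniformly_continuous_on_def using eta0 cmv by (metis divide_pos_pos)
  obtain m0 :: nat where m0: "max ((b-a)/d) ((b-a)*X*E2*2/\<epsilon>^2) < real m0"
    using reals_Archimedean2 by blast
  define m where "m = Suc m0"
  have m1: "m \<ge> 1" by (simp add: m_def)
  have mpos: "real m > 0" by (simp add: m_def)
  have mlt: "max ((b-a)/d) ((b-a)*X*E2*2/\<epsilon>^2) < real m" using m0 by (simp add: m_def)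
  have hd: "(b-a)/m < d"
  proof -
    have "(b-a)/d < real m" using mlt by simp
    then have "b-a < real m * d" using d by (simp add: divide_less_eq)
    then show ?thesis using mpos by (simp add: divide_less_eq mult.commute)
  qed
  have hX: "E2 * ((b-a)/m * X) \<le> \<epsilon>^2/2"
  proof -
    have "(b-a)*X*E2*2/\<epsilon>^2 < real m" using mlt by simp
    then have "(b-a)*X*E2*2 < real m * \<epsilon>^2" using e by (simp add: divide_less_eq)
    then have "E2 * ((b-a) * X) \<le> real m * (\<epsilon>^2/2)" by (simp add: algebra_simps)
    then show ?thesis using mpos by (simp add: field_simps)
  qed
  have eta: "norm ((B r1 - B r2) *v c) \<le> \<eta> * norm c"
    if r: "r1 \<in> {a..b}" "r2 \<in> {a..b}" "\<bar>r1 - r2\<bar> \<le> (b-a)/m" for r1 r2 c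
  proof -
    have "dist r1 r2 < d" using r hd by (simp add: dist_real_def)
    then have "dist (B r1) (B r2) < \<eta>/cmv" using dB[OF r(2) r(1)] by simp
    then have nB: "norm (B r1 - B r2) \<le> \<eta>/cmv" by (simp add: dist_norm)
    have "norm ((B r1 - B r2) *v c) \<le> cmv * norm (B r1 - B r2) * norm c" by (rule cmvb)
    also have "\<dots> \<le> cmv * (\<eta>/cmv) * norm c" using nB cmv by (intro mult_right_mono mult_left_mono) auto
    also have "\<dots> = \<eta> * norm c" using cmv by simp
    finally show ?thesis .
  qed
  obtain u where u: "u \<in> meas_maps U a b" and ub: "(norm (Wf u b))^2 \<le>
           exp(2*KA*(b-a)) * (((b-a)/m) * (2*KA*Rw*(KA*Rw+CF) + (KA*Rw+CF)^2) + 4*Rw*RU*\<eta>) / (2*KA)"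
    using steer_m[of a b m U B A Wf G KA RU CF Rw \<eta>, OF ab' m1 Uc Une Bc sol Gw na KA KAb RU Fb Rwb eta
        less_imp_le[OF eta0] Rw0 CF0 RU0] by blast
  have "(norm (Wf u b))^2 \<le> E2 * ((b-a)/m * X) + E2 * (4*Rw*RU*\<eta>)"
  proof -
    have gen: "e * (y + z) / k = e/k * y + e/k * z" for e y z k :: real
      by (simp add: distrib_left add_divide_distrib)
    show ?thesis using ub[folded X_def] gen[of "exp(2*KA*(b-a))" "(b-a)/m * X" "4*Rw*RU*\<eta>" "2*KA"]
      by (simp add: E2_def)
  qed
  also have "\<dots> \<le> \<epsilon>^2/2 + \<epsilon>^2/2" by (rule add_mono[OF hX eta_b])
  also have "\<dots> = \<epsilon>^2" by simp
  finally have "(norm (Wf u b))^2 \<le> \<epsilon>^2" .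
  then have "norm (Wf u b) \<le> \<epsilon>" using power2_le_imp_le[of "norm (Wf u b)" \<epsilon>] e by simp
  then show ?thesis using u by blast
qed

lemma mv_meas_int:
  fixes M :: "real \<Rightarrow> real^'m^'n" and v :: "real \<Rightarrow> real^'m"
  assumes Mc: "continuous_on {a..b} M" and vm: "v measurable_on {a..b}"
    and vb: "\<And>r. r \<in> {a..b} \<Longrightarrow> norm (v r) \<le> R"
  shows "(\<lambda>r. M r *v v r) integrable_on {a..b}"
proof -
  obtain K where K: "K > 0" and Kb: "\<And>r w. r \<in> {a..b} \<Longrightarrow> norm (M r *v w) \<le> K * norm w"
    using mv_K[OF Mc] by blast
  have "M \<in> borel_measurable (lebesgue_on {a..b})"
    by (rule continuous_imp_measurable_on_sets_lebesgue[OF Mc]) simp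
  then have Mm: "M measurable_on {a..b}" by (simp add: measurable_on_iff_borel_measurable)
  have "(\<lambda>r. M r *v v r) measurable_on {a..b}"
    using measurable_on_bilinear[OF bilinear_mv Mm vm] .
  then have bm: "(\<lambda>r. M r *v v r) \<in> borel_measurable (lebesgue_on {a..b})"
    by (simp add: measurable_on_iff_borel_measurable)
  show ?thesis
  proof (rule measurable_bounded_by_integrable_imp_integrable[OF bm])
    show "(\<lambda>r. K * R) integrable_on {a..b}" by (rule integrable_const_ivl)
    show "{a..b} \<in> sets lebesgue" by simp
    fix r assume r: "r \<in> {a..b}"
    have "norm (M r *v v r) \<le> K * norm (v r)" by (rule Kb[OF r])
    also have "\<dots> \<le> K * R" using vb[OF r] K by simp
    finally show "norm (M r *v v r) \<le> K * R" .
  qed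
qed

lemma compact_bound:
  fixes U :: "'a::real_normed_vector set"
  assumes "compact U"
  obtains R where "R \<ge> 0" "\<And>c. c \<in> U \<Longrightarrow> norm c \<le> R"
proof -
  obtain R where "\<forall>x\<in>U. norm x \<le> R" using compact_imp_bounded[OF assms] by (auto simp: bounded_iff)
  then show ?thesis using that[of "max R 0"] by force
qed

lemma L_game:
  fixes A :: "real \<Rightarrow> real^'n^'n" and B :: "real \<Rightarrow> real^'m^'n" and E :: "real \<Rightarrow> real^'l^'n"
    and U :: "(real^'m) set" and D :: "(real^'l) set" and g :: "real^'n \<Rightarrow> real"
    and \<omega>s \<xi>st yv :: "real \<Rightarrow> real^'n"
  assumes tT: "t \<le> T"
    and Ac: "continuous_on {t..T} A" and Bc: "continuous_on {t..T} B" and Ec: "continuous_on {t..T} E"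
    and Uc: "compact U" and Une: "U \<noteq> {}" and Dc: "compact D" and Dne: "D \<noteq> {}"
    and Lg: "Lg \<ge> 0" and Lip: "Lg-lipschitz_on UNIV g"
    and \<delta>: "\<delta> \<in> strategies U D t T"
    and \<omega>W: "\<And>r. r \<in> {t..T} \<Longrightarrow> \<omega>s r \<in> Wset B E U D r"
    and \<xi>e: "\<And>s. s \<in> {t..T} \<Longrightarrow> ((\<lambda>r. A r *v \<xi>st r + \<omega>s r) has_integral (\<xi>st s - \<xi>st t)) {t..s}"
    and ye: "\<And>s. s \<in> {t..T} \<Longrightarrow> ((\<lambda>r. A r *v yv r) has_integral (yv s - (x - \<xi>st t))) {t..s}"
  shows "(INF u\<in>meas_maps U t T. g (end_state A B E T t x u (\<delta> u))) \<le> g (\<xi>st T + yv T)"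
proof -
  have \<delta>m: "\<delta> u \<in> meas_maps D t T" if "u \<in> meas_maps U t T" for u
    using \<delta> that by (auto simp: strategies_def)
  have \<delta>na: "\<And>s u1 u2. s \<in> {t..T} \<Longrightarrow> u1 \<in> meas_maps U t T \<Longrightarrow> u2 \<in> meas_maps U t T \<Longrightarrow>
        (AE r in lebesgue. r \<in> {t..s} \<longrightarrow> u1 r = u2 r) \<Longrightarrow> (AE r in lebesgue. r \<in> {t..s} \<longrightarrow> \<delta> u1 r = \<delta> u2 r)"
    using \<delta> by (auto simp: strategies_def)
  obtain RU where RU0: "RU \<ge> 0" and RU: "\<And>c. c \<in> U \<Longrightarrow> norm c \<le> RU" using compact_bound[OF Uc] by blast
  obtain RD where RD0: "RD \<ge> 0" and RD: "\<And>c. c \<in> D \<Longrightarrow> norm c \<le> RD" using compact_bound[OF Dc] by blast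
  obtain KB where KB: "KB > 0" and KBb: "\<And>r v. r \<in> {t..T} \<Longrightarrow> norm (B r *v v) \<le> KB * norm v"
    using mv_K[OF Bc] by blast
  obtain KE where KE: "KE > 0" and KEb: "\<And>r v. r \<in> {t..T} \<Longrightarrow> norm (E r *v v) \<le> KE * norm v"
    using mv_K[OF Ec] by blast
  obtain KA where KA: "KA > 0" and KAb: "\<And>r v. r \<in> {t..T} \<Longrightarrow> norm (A r *v v) \<le> KA * norm v"
    using mv_K[OF Ac] by blast
  have Wmem: "\<exists>c\<in>U. B r *v c = \<omega>s r - E r *v d" if r: "r \<in> {t..T}" and d: "d \<in> D" for r d
  proof -
    have "\<omega>s r \<in> mink_diff ((\<lambda>u. B r *v u) ` U) ((\<lambda>d. - (E r *v d)) ` D)" using \<omega>W[OF r] by (simp add: Wset_def)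
    then have "\<omega>s r + - (E r *v d) \<in> (\<lambda>u. B r *v u) ` U" using d by (auto simp: mink_diff_def)
    then show ?thesis by (auto simp: image_iff)
  qed
  define C\<omega> where "C\<omega> = KB*RU + KE*RD"
  have \<omega>b: "norm (\<omega>s r) \<le> C\<omega>" if r: "r \<in> {t..T}" for r
  proof -
    obtain d0 where d0: "d0 \<in> D" using Dne by blast
    obtain c where c: "c \<in> U" "B r *v c = \<omega>s r - E r *v d0" using Wmem[OF r d0] by blast
    have "\<omega>s r = B r *v c + E r *v d0" using c(2) by simp
    then have "norm (\<omega>s r) \<le> norm (B r *v c) + norm (E r *v d0)" by (simp add: norm_triangle_ineq)
    also have "\<dots> \<le> KB * norm c + KE * norm d0" using KBb[OF r, of c] KEb[OF r, of d0] by simp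
    also have "\<dots> \<le> KB*RU + KE*RD" using RU[OF c(1)] RD[OF d0] KB KE by (intro add_mono mult_left_mono) auto
    finally show ?thesis by (simp add: C\<omega>_def)
  qed
  define f where "f = (\<lambda>u r. B r *v u r + E r *v \<delta> u r)"
  have fint: "f u integrable_on {t..T}" if u: "u \<in> meas_maps U t T" for u
  proof -
    have um: "u measurable_on {t..T}" and ub: "\<And>r. r \<in> {t..T} \<Longrightarrow> norm (u r) \<le> RU"
      using u RU by (auto simp: meas_maps_def)
    have dm: "\<delta> u measurable_on {t..T}" and db: "\<And>r. r \<in> {t..T} \<Longrightarrow> norm (\<delta> u r) \<le> RD"
      using \<delta>m[OF u] RD by (auto simp: meas_maps_def)
    show ?thesis unfolding f_def
      by (rule integrable_add[OF mv_meas_int[OF Bc um ub] mv_meas_int[OF Ec dm db]])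
  qed
  define traj where "traj = (\<lambda>u. SOME \<xi>. \<xi> t = x \<and> (\<forall>s\<in>{t..T}. ((\<lambda>r. A r *v \<xi> r + f u r) has_integral (\<xi> s - x)) {t..s}))"
  have traj: "traj u t = x \<and> (\<forall>s\<in>{t..T}. ((\<lambda>r. A r *v traj u r + f u r) has_integral (traj u s - x)) {t..s})"
    if u: "u \<in> meas_maps U t T" for u
    unfolding traj_def by (rule someI_ex[OF lin_sol_exists[OF tT Ac fint[OF u]]])
  have end_eq: "end_state A B E T t x u (\<delta> u) = traj u T" if u: "u \<in> meas_maps U t T" for u
    unfolding end_state_def
  proof (rule the_equality)
    have "is_traj A B E T t x u (\<delta> u) (traj u)"
      using traj[OF u] by (simp add: is_traj_def f_def add.assoc)
    then show "\<exists>\<xi>. is_traj A B E T t x u (\<delta> u) \<xi> \<and> \<xi> T = traj u T" by blast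
    fix y assume "\<exists>\<xi>. is_traj A B E T t x u (\<delta> u) \<xi> \<and> \<xi> T = y"
    then obtain \<xi> where it: "is_traj A B E T t x u (\<delta> u) \<xi>" and y: "\<xi> T = y" by blast
    have h1: "\<And>s. s \<in> {t..T} \<Longrightarrow> ((\<lambda>r. A r *v \<xi> r + f u r) has_integral (\<xi> s - x)) {t..s}"
      using it by (simp add: is_traj_def f_def add.assoc)
    have "\<xi> T = traj u T"
      by (rule lin_sol_uniq[OF tT Ac h1]) (use traj[OF u] tT in auto)
    then show "y = traj u T" using y by simp
  qed
  define Wf where "Wf = (\<lambda>u s. traj u s - \<xi>st s - yv s)"
  define G where "G = (\<lambda>u r. E r *v \<delta> u r - \<omega>s r)"
  have sol: "((\<lambda>r. A r *v Wf u r + (B r *v u r + G u r)) has_integral Wf u s) {t..s}"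
    if u: "u \<in> meas_maps U t T" and s: "s \<in> {t..T}" for u s
  proof -
    have h: "((\<lambda>r. (A r *v traj u r + f u r) - (A r *v \<xi>st r + \<omega>s r) - A r *v yv r) has_integral
              ((traj u s - x) - (\<xi>st s - \<xi>st t) - (yv s - (x - \<xi>st t)))) {t..s}"
    proof -
      have T1: "((\<lambda>r. A r *v traj u r + f u r) has_integral (traj u s - x)) {t..s}" using traj[OF u] s by blast
      show ?thesis by (rule has_integral_diff[OF has_integral_diff[OF T1 \<xi>e[OF s]] ye[OF s]])
    qed
    have "(\<lambda>r. (A r *v traj u r + f u r) - (A r *v \<xi>st r + \<omega>s r) - A r *v yv r) =
          (\<lambda>r. A r *v Wf u r + (B r *v u r + G u r))"
      by (rule ext) (simp add: Wf_def G_def f_def matrix_vector_mult_diff_distrib algebra_simps)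
    moreover have "(traj u s - x) - (\<xi>st s - \<xi>st t) - (yv s - (x - \<xi>st t)) = Wf u s"
      by (simp add: Wf_def algebra_simps)
    ultimately show ?thesis using h by simp
  qed
  have Gb: "norm (G u r) \<le> KE*RD + C\<omega>" if u: "u \<in> meas_maps U t T" and r: "r \<in> {t..T}" for u r
  proof -
    have dD: "\<delta> u r \<in> D" using \<delta>m[OF u] r by (auto simp: meas_maps_def)
    have "norm (G u r) \<le> norm (E r *v \<delta> u r) + norm (\<omega>s r)" unfolding G_def by (rule norm_triangle_ineq4)
    also have "\<dots> \<le> KE*RD + C\<omega>"
      using KEb[OF r, of "\<delta> u r"] RD[OF dD] KE \<omega>b[OF r]
      by (smt (verit) mult_left_mono)
    finally show ?thesis .
  qed
  have Gw: "\<exists>c\<in>U. B r *v c + G u r = 0" if u: "u \<in> meas_maps U t T" and r: "r \<in> {t..T}" for u r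
  proof -
    have dD: "\<delta> u r \<in> D" using \<delta>m[OF u] r by (auto simp: meas_maps_def)
    obtain c where c: "c \<in> U" "B r *v c = \<omega>s r - E r *v \<delta> u r" using Wmem[OF r dD] by blast
    then have "B r *v c + G u r = 0" by (simp add: G_def)
    then show ?thesis using c(1) by blast
  qed
  have na: "Wf u1 s = Wf u2 s" if u1: "u1 \<in> meas_maps U t T" and u2: "u2 \<in> meas_maps U t T"
    and s: "s \<in> {t..T}" and eq: "\<forall>r. t \<le> r \<and> r < s \<longrightarrow> u1 r = u2 r" for u1 u2 s
  proof -
    have ae: "AE r in lebesgue. r \<in> {t..s} \<longrightarrow> u1 r = u2 r"
    proof (rule AE_I')
      show "{s} \<in> null_sets lebesgue" using negligible_iff_null_sets negligible_sing by blast
      show "{r \<in> space lebesgue. \<not> (r \<in> {t..s} \<longrightarrow> u1 r = u2 r)} \<subseteq> {s}"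
      proof (rule subsetI)
        fix r assume "r \<in> {r \<in> space lebesgue. \<not> (r \<in> {t..s} \<longrightarrow> u1 r = u2 r)}"
        then have r: "t \<le> r" "r \<le> s" "u1 r \<noteq> u2 r" by auto
        have "\<not> r < s" using eq r by blast
        then show "r \<in> {s}" using r by simp
      qed
    qed
    have "AE r in lebesgue. r \<in> {t..s} \<longrightarrow> \<delta> u1 r = \<delta> u2 r" by (rule \<delta>na[OF s u1 u2 ae])
    then obtain N where N: "{r \<in> space lebesgue. \<not> (r \<in> {t..s} \<longrightarrow> \<delta> u1 r = \<delta> u2 r)} \<subseteq> N"
      and N0: "emeasure lebesgue N = 0" and Ns: "N \<in> sets lebesgue" by (rule AE_E)
    have "N \<in> null_sets lebesgue" using N0 Ns by (simp add: null_sets_def)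
    then have "negligible N" by (simp add: negligible_iff_null_sets)
    then have negN: "negligible (N \<union> {s})" by (simp add: negligible_Un)
    have feq: "f u2 r = f u1 r" if "r \<in> {t..s} - (N \<union> {s})" for r
    proof -
      have "u1 r = u2 r" using eq that by auto
      moreover have "\<delta> u1 r = \<delta> u2 r"
      proof (rule ccontr)
        assume "\<delta> u1 r \<noteq> \<delta> u2 r"
        moreover have "r \<in> {t..s}" "r \<notin> N" using that by auto
        ultimately have "r \<in> {r \<in> space lebesgue. \<not> (r \<in> {t..s} \<longrightarrow> \<delta> u1 r = \<delta> u2 r)}" by simp
        then show False using N \<open>r \<notin> N\<close> by blast
      qed
      ultimately show ?thesis by (simp add: f_def)
    qed
    have ts: "t \<le> s" using s by auto
    have sub: "{t..s} \<subseteq> {t..T}" using s by auto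
    have Ac': "continuous_on {t..s} A" using continuous_on_subset[OF Ac sub] .
    have h1: "((\<lambda>r. A r *v traj u1 r + f u1 r) has_integral (traj u1 s' - x)) {t..s'}" if "s' \<in> {t..s}" for s'
    proof -
      have "s' \<in> {t..T}" using that sub by blast
      then show ?thesis using traj[OF u1] by blast
    qed
    have h2: "((\<lambda>r. A r *v traj u2 r + f u1 r) has_integral (traj u2 s' - x)) {t..s'}" if s': "s' \<in> {t..s}" for s'
    proof (rule has_integral_spike[OF negN])
      show "((\<lambda>r. A r *v traj u2 r + f u2 r) has_integral (traj u2 s' - x)) {t..s'}"
      proof -
        have "s' \<in> {t..T}" using s' sub by blast
        then show ?thesis using traj[OF u2] by blast
      qed
      fix r assume "r \<in> {t..s'} - (N \<union> {s})"
      then have "r \<in> {t..s} - (N \<union> {s})" using s' by auto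
      then show "A r *v traj u2 r + f u1 r = A r *v traj u2 r + f u2 r" using feq by simp
    qed
    have "traj u1 s = traj u2 s" by (rule lin_sol_uniq[OF ts Ac' h1 h2]) (use ts in auto)
    then show ?thesis by (simp add: Wf_def)
  qed
  define CF where "CF = KB*RU + (KE*RD + C\<omega>)"
  have CF0: "CF \<ge> 0" using KB RU0 KE RD0 by (simp add: CF_def C\<omega>_def)
  have Fb: "norm (B r *v u r + G u r) \<le> CF" if u: "u \<in> meas_maps U t T" and r: "r \<in> {t..T}" for u r
  proof -
    have uU: "u r \<in> U" using u r by (auto simp: meas_maps_def)
    have "norm (B r *v u r + G u r) \<le> norm (B r *v u r) + norm (G u r)" by (rule norm_triangle_ineq)
    also have "\<dots> \<le> KB*RU + (KE*RD + C\<omega>)"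
      using KBb[OF r, of "u r"] RU[OF uU] KB Gb[OF u r] by (smt (verit) mult_left_mono)
    finally show ?thesis by (simp add: CF_def)
  qed
  define Rw where "Rw = 2*(CF*(T-t))*exp(2*KA*(T-t))"
  have Rwb: "norm (Wf u T) \<le> Rw" if u: "u \<in> meas_maps U t T" for u
    unfolding Rw_def
    by (rule apriori(2)[of t T A "Wf u" "\<lambda>r. B r *v u r + G u r", OF tT sol[OF u] KA KAb Fb[OF u] CF0])
       (use tT in auto)
  define z where "z = \<xi>st T + yv T"
  have gend: "\<bar>g (end_state A B E T t x u (\<delta> u)) - g z\<bar> \<le> Lg * norm (Wf u T)" if u: "u \<in> meas_maps U t T" for u
  proof -
    have "end_state A B E T t x u (\<delta> u) = z + Wf u T" using end_eq[OF u] by (simp add: z_def Wf_def)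
    moreover have "dist (g (z + Wf u T)) (g z) \<le> Lg * dist (z + Wf u T) z"
      by (rule lipschitz_onD[OF Lip]) auto
    ultimately show ?thesis by (simp add: dist_norm dist_real_def)
  qed
  have bdd: "bdd_below ((\<lambda>u. g (end_state A B E T t x u (\<delta> u))) ` meas_maps U t T)"
  proof (rule bdd_belowI2)
    fix u assume u: "u \<in> meas_maps U t T"
    have "Lg * norm (Wf u T) \<le> Lg * Rw" using Rwb[OF u] Lg by (rule mult_left_mono)
    then show "g z - Lg * Rw \<le> g (end_state A B E T t x u (\<delta> u))" using gend[OF u] by linarith
  qed
  show ?thesis
  proof (rule field_le_epsilon)
    fix e :: real assume e: "e > 0"
    have e': "e/(Lg+1) > 0" using e Lg by simp
    obtain u where u: "u \<in> meas_maps U t T" and wb: "norm (Wf u T) \<le> e/(Lg+1)"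
      using steer[of t T U A B Wf G "KE*RD + C\<omega>", OF tT Uc Une Ac Bc sol Gb Gw na e'] by blast
    have "Lg * norm (Wf u T) \<le> Lg * (e/(Lg+1))" using wb Lg by (rule mult_left_mono)
    also have "\<dots> \<le> e"
    proof -
      have "Lg * (e/(Lg+1)) = e * (Lg/(Lg+1))" by simp
      also have "\<dots> \<le> e * 1" using e Lg by (intro mult_left_mono) auto
      finally show ?thesis by simp
    qed
    finally have "g (end_state A B E T t x u (\<delta> u)) \<le> g z + e" using gend[OF u] by linarith
    then show "(INF u\<in>meas_maps U t T. g (end_state A B E T t x u (\<delta> u))) \<le> g (\<xi>st T + yv T) + e"
      using cINF_lower2[OF bdd u] by (simp add: z_def)
  qed
qed

lemma convex_Wset:
  assumes "convex U"
  shows "convex (Wset B E U D r)"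
proof (rule convexI)
  fix c1 c2 and p q :: real
  assume c1: "c1 \<in> Wset B E U D r" and c2: "c2 \<in> Wset B E U D r" and p0: "0 \<le> p" and q0: "0 \<le> q" and pq: "p + q = 1"
  have c1': "(\<lambda>z. c1 + z) ` (\<lambda>d. - (E r *v d)) ` D \<subseteq> (\<lambda>u. B r *v u) ` U" using c1 by (simp add: Wset_def mink_diff_def)
  have c2': "(\<lambda>z. c2 + z) ` (\<lambda>d. - (E r *v d)) ` D \<subseteq> (\<lambda>u. B r *v u) ` U" using c2 by (simp add: Wset_def mink_diff_def)
  have lin: "linear (\<lambda>u. B r *v u)" by simp
  have cv: "convex ((\<lambda>u. B r *v u) ` U)" using convex_linear_image[OF lin assms] .
  have "(\<lambda>z. p *\<^sub>R c1 + q *\<^sub>R c2 + z) ` (\<lambda>d. - (E r *v d)) ` D \<subseteq> (\<lambda>u. B r *v u) ` U"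
  proof (rule subsetI)
    fix z assume "z \<in> (\<lambda>z. p *\<^sub>R c1 + q *\<^sub>R c2 + z) ` (\<lambda>d. - (E r *v d)) ` D"
    then obtain d where d: "d \<in> D" and zd: "z = p *\<^sub>R c1 + q *\<^sub>R c2 + - (E r *v d)" by blast
    have m1: "c1 + - (E r *v d) \<in> (\<lambda>u. B r *v u) ` U" using c1' d by blast
    have m2: "c2 + - (E r *v d) \<in> (\<lambda>u. B r *v u) ` U" using c2' d by blast
    have "p *\<^sub>R (c1 + - (E r *v d)) + q *\<^sub>R (c2 + - (E r *v d)) \<in> (\<lambda>u. B r *v u) ` U"
      using convexD[OF cv m1 m2 p0 q0 pq] .
    moreover have "p *\<^sub>R (c1 + - (E r *v d)) + q *\<^sub>R (c2 + - (E r *v d)) = z"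
    proof -
      have "p *\<^sub>R (c1 + - (E r *v d)) + q *\<^sub>R (c2 + - (E r *v d)) = p *\<^sub>R c1 + q *\<^sub>R c2 - (p + q) *\<^sub>R (E r *v d)"
        by (simp add: algebra_simps)
      then show ?thesis using pq zd by simp
    qed
    ultimately show "z \<in> (\<lambda>u. B r *v u) ` U" by simp
  qed
  then show "p *\<^sub>R c1 + q *\<^sub>R c2 \<in> Wset B E U D r" by (simp add: Wset_def mink_diff_def)
qed

lemma sub_int2:
  fixes f :: "real \<Rightarrow> 'a::euclidean_space"
  assumes h1: "(f has_integral I1) {a..b}" and h2: "(f has_integral I2) {c..b}" and ac: "a \<le> c" "c \<le> b"
  shows "(f has_integral (I1 - I2)) {a..c}"
proof -
  have fi: "f integrable_on {a..b}" using h1 by blast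
  have "integral {a..c} f + integral {c..b} f = integral {a..b} f"
    by (rule Henstock_Kurzweil_Integration.integral_combine[OF ac fi])
  then have eq: "integral {a..c} f = I1 - I2" using integral_unique[OF h1] integral_unique[OF h2]
    by (metis add_diff_cancel_right')
  have "f integrable_on {a..c}" by (rule integrable_on_subinterval[OF fi]) (use ac in auto)
  then show ?thesis using eq by (metis integrable_integral)
qed

lemma yv_lemma:
  fixes A :: "real \<Rightarrow> real^'n^'n" and Y :: "real \<Rightarrow> real^'n^'n"
  assumes t: "t \<in> {0..T}" and Yt: "Y t = mat 1"
    and dY: "\<forall>r\<in>{0..T}. (Y has_vector_derivative (A r ** Y r)) (at r within {0..T})"
    and s: "s \<in> {t..T}"
  shows "((\<lambda>r. A r *v (Y r *v v0)) has_integral (Y s *v v0 - v0)) {t..s}"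
proof -
  have ts: "t \<le> s" using s by auto
  have "((\<lambda>r. A r ** Y r) has_integral (Y s - Y t)) {t..s}"
  proof (rule fundamental_theorem_of_calculus[OF ts])
    fix r assume r: "r \<in> {t..s}"
    have sub: "{t..s} \<subseteq> {0..T}" using t s by auto
    then have "r \<in> {0..T}" using r by auto
    then show "(Y has_vector_derivative A r ** Y r) (at r within {t..s})"
      using dY has_vector_derivative_within_subset sub by blast
  qed
  then have "((\<lambda>r. (A r ** Y r) *v v0) has_integral ((Y s - Y t) *v v0)) {t..s}"
  proof -
    have bl: "bounded_linear (\<lambda>M::real^'n^'n. M *v v0)"
      using bilinear_conv_bounded_bilinear[THEN iffD1, OF bilinear_mv] bounded_bilinear.bounded_linear_left
      by blast
    from has_integral_linear[OF \<open>((\<lambda>r. A r ** Y r) has_integral (Y s - Y t)) {t..s}\<close> bl]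
    show ?thesis by (simp add: o_def)
  qed
  then show ?thesis using Yt by (simp add: matrix_vector_mul_assoc matrix_vector_mult_diff_rdistrib)
qed

theorem theorem3:
  fixes T :: real
    and A :: "real \<Rightarrow> real^'n^'n" and B :: "real \<Rightarrow> real^'m^'n" and E :: "real \<Rightarrow> real^'l^'n"
    and U :: "(real^'m) set" and D :: "(real^'l) set"
    and g :: "real^'n \<Rightarrow> real" and Lg :: real
    and N :: nat and \<gamma> :: "nat \<Rightarrow> real" and nk :: "nat \<Rightarrow> nat"
    and xbar :: "nat \<Rightarrow> nat \<Rightarrow> real^'n"
    and \<omega> :: "nat \<Rightarrow> nat \<Rightarrow> real \<Rightarrow> real^'n"
    and \<xi>s :: "nat \<Rightarrow> nat \<Rightarrow> real \<Rightarrow> real^'n"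
    and t :: real and x :: "real^'n"
  assumes "T > 0"
    and "continuous_on {0..T} A" and "continuous_on {0..T} B" and "continuous_on {0..T} E"
    and "compact U" and "convex U" and "U \<noteq> {}"
    and "compact D" and "convex D" and "D \<noteq> {}"
    and "continuous_on UNIV g"
    and "convex_on UNIV g"
    and "Lg \<ge> 0" and "Lg-lipschitz_on UNIV g"
    and "\<forall>s\<in>{0..T}. Wset B E U D s \<noteq> {}"
    and "N \<ge> 1"
    and "\<forall>k\<in>{1..N}. \<gamma> k \<in> range g"
    and "\<forall>k\<in>{1..N}. nk k \<ge> 1"
    and "\<forall>k\<in>{1..N}. \<forall>i\<in>{1..nk k}. g (xbar i k) = \<gamma> k"
    and "\<forall>k\<in>{1..N}. \<forall>i\<in>{1..nk k}. \<omega> i k measurable_on {0..T} \<and>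
            (\<forall>s\<in>{0..T}. \<omega> i k s \<in> Wset B E U D s)"
    and "\<forall>k\<in>{1..N}. \<forall>i\<in>{1..nk k}. \<forall>s\<in>{0..T}.
            ((\<lambda>r. A r *v \<xi>s i k r + \<omega> i k r) has_integral (xbar i k - \<xi>s i k s)) {s..T}"
    and "t \<in> {0..T}"
  shows "value_fun A B E U D g T t x \<le>
     Min ((\<lambda>k. Lg * (INF \<xi>\<in>convex hull ((\<lambda>i. \<xi>s i k t) ` {1..nk k}).
                        norm (state_trans A T T t *v (x - \<xi>)))
              + \<gamma> k) ` {1..N})"
proof -
  note T0 = assms(1) and Ac = assms(2) and Bc = assms(3) and Ec = assms(4)
    and Uc = assms(5) and Ucv = assms(6) and Une = assms(7) and Dc = assms(8) and Dne = assms(10)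
    and gcv = assms(12) and Lg0 = assms(13) and Lip = assms(14) and N1 = assms(16) and nk1 = assms(18)
    and gx = assms(19) and \<omega>W = assms(20) and \<xi>i = assms(21) and t = assms(22)
  have tT: "t \<le> T" and t0: "0 \<le> t" using t by auto
  have sub: "{t..T} \<subseteq> {0..T}" using t0 by auto
  have Ac': "continuous_on {t..T} A" using continuous_on_subset[OF Ac sub] .
  have Bc': "continuous_on {t..T} B" using continuous_on_subset[OF Bc sub] .
  have Ec': "continuous_on {t..T} E" using continuous_on_subset[OF Ec sub] .
  obtain Y where Yt: "Y t = mat 1" and dY: "\<forall>r\<in>{0..T}. (Y has_vector_derivative (A r ** Y r)) (at r within {0..T})"
    using fundamental_matrix[OF Ac less_imp_le[OF T0] t] by blast
  have Phi: "state_trans A T T t = Y T" by (rule state_trans_eq[OF Ac less_imp_le[OF T0] t Yt dY])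
  obtain d0 where d0: "d0 \<in> D" using Dne by blast
  have strat_ne: "strategies U D t T \<noteq> {}"
  proof -
    have "(\<lambda>u. \<lambda>_. d0) \<in> strategies U D t T"
      using d0 by (simp add: strategies_def meas_maps_def)
    then show ?thesis by blast
  qed
  have main: "value_fun A B E U D g T t x \<le> Lg * norm (Y T *v (x - \<xi>0)) + \<gamma> k"
    if k: "k \<in> {1..N}" and \<xi>0: "\<xi>0 \<in> convex hull ((\<lambda>i. \<xi>s i k t) ` {1..nk k})" for k \<xi>0
  proof -
    define S where "S = (\<lambda>i. \<xi>s i k t) ` {1..nk k}"
    have Sfin: "finite S" by (simp add: S_def)
    have Sne: "S \<noteq> {}" using nk1 k by (auto simp: S_def)
    obtain \<mu> where \<mu>0: "\<forall>y\<in>S. 0 \<le> \<mu> y" and \<mu>1: "sum \<mu> S = 1" and \<mu>\<xi>: "(\<Sum>y\<in>S. \<mu> y *\<^sub>R y) = \<xi>0"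
      using \<xi>0 unfolding convex_hull_finite[OF Sfin] S_def[symmetric] by blast
    define \<iota> where "\<iota> = (\<lambda>y. SOME i. i \<in> {1..nk k} \<and> \<xi>s i k t = y)"
    have \<iota>: "\<iota> y \<in> {1..nk k} \<and> \<xi>s (\<iota> y) k t = y" if "y \<in> S" for y
    proof -
      have "\<exists>i. i \<in> {1..nk k} \<and> \<xi>s i k t = y" using that by (auto simp: S_def)
      then show ?thesis unfolding \<iota>_def by (rule someI_ex)
    qed
    define \<xi>st where "\<xi>st = (\<lambda>s. \<Sum>y\<in>S. \<mu> y *\<^sub>R \<xi>s (\<iota> y) k s)"
    define \<omega>st where "\<omega>st = (\<lambda>r. \<Sum>y\<in>S. \<mu> y *\<^sub>R \<omega> (\<iota> y) k r)"
    define xb where "xb = (\<Sum>y\<in>S. \<mu> y *\<^sub>R xbar (\<iota> y) k)"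
    have \<xi>st_t: "\<xi>st t = \<xi>0" using \<mu>\<xi> \<iota> by (simp add: \<xi>st_def)
    have \<xi>T: "\<xi>s i k T = xbar i k" if i: "i \<in> {1..nk k}" for i
    proof -
      have "((\<lambda>r. A r *v \<xi>s i k r + \<omega> i k r) has_integral (xbar i k - \<xi>s i k T)) {T..T}"
      proof -
        have "T \<in> {0..T}" using T0 by simp
        then show ?thesis using \<xi>i k i by blast
      qed
      then have "((\<lambda>r. A r *v \<xi>s i k r + \<omega> i k r) has_integral (xbar i k - \<xi>s i k T)) {T}" by simp
      then have "xbar i k - \<xi>s i k T = 0" using has_integral_unique[OF _ has_integral_refl(2)] by blast
      then show ?thesis by simp
    qed
    have \<xi>st_T: "\<xi>st T = xb" using \<xi>T \<iota> by (simp add: \<xi>st_def xb_def)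
    have \<omega>stW: "\<omega>st r \<in> Wset B E U D r" if r: "r \<in> {t..T}" for r
      unfolding \<omega>st_def
    proof (rule convex_sum[OF Sfin convex_Wset[OF Ucv] \<mu>1])
      show "\<And>i. i \<in> S \<Longrightarrow> 0 \<le> \<mu> i" using \<mu>0 by blast
      fix y assume "y \<in> S"
      then have "\<iota> y \<in> {1..nk k}" using \<iota> by blast
      then show "\<omega> (\<iota> y) k r \<in> Wset B E U D r" using \<omega>W k r sub by blast
    qed
    have \<xi>e: "((\<lambda>r. A r *v \<xi>st r + \<omega>st r) has_integral (\<xi>st s - \<xi>st t)) {t..s}" if s: "s \<in> {t..T}" for s
    proof -
      have each: "((\<lambda>r. \<mu> y *\<^sub>R (A r *v \<xi>s (\<iota> y) k r + \<omega> (\<iota> y) k r)) has_integral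
                  \<mu> y *\<^sub>R (\<xi>s (\<iota> y) k s - \<xi>s (\<iota> y) k t)) {t..s}" if y: "y \<in> S" for y
      proof -
        have i: "\<iota> y \<in> {1..nk k}" using \<iota>[OF y] by blast
        have h1: "((\<lambda>r. A r *v \<xi>s (\<iota> y) k r + \<omega> (\<iota> y) k r) has_integral (xbar (\<iota> y) k - \<xi>s (\<iota> y) k t)) {t..T}"
          using \<xi>i k i t by blast
        have h2: "((\<lambda>r. A r *v \<xi>s (\<iota> y) k r + \<omega> (\<iota> y) k r) has_integral (xbar (\<iota> y) k - \<xi>s (\<iota> y) k s)) {s..T}"
          using \<xi>i k i s sub by blast
        have "((\<lambda>r. A r *v \<xi>s (\<iota> y) k r + \<omega> (\<iota> y) k r) has_integral
               ((xbar (\<iota> y) k - \<xi>s (\<iota> y) k t) - (xbar (\<iota> y) k - \<xi>s (\<iota> y) k s))) {t..s}"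
          by (rule sub_int2[OF h1 h2]) (use s in auto)
        then show ?thesis by (intro has_integral_cmul) (simp add: algebra_simps)
      qed
      have "((\<lambda>r. \<Sum>y\<in>S. \<mu> y *\<^sub>R (A r *v \<xi>s (\<iota> y) k r + \<omega> (\<iota> y) k r)) has_integral
              (\<Sum>y\<in>S. \<mu> y *\<^sub>R (\<xi>s (\<iota> y) k s - \<xi>s (\<iota> y) k t))) {t..s}"
        by (rule has_integral_sum[OF Sfin each])
      moreover have "(\<lambda>r. \<Sum>y\<in>S. \<mu> y *\<^sub>R (A r *v \<xi>s (\<iota> y) k r + \<omega> (\<iota> y) k r)) = (\<lambda>r. A r *v \<xi>st r + \<omega>st r)"
      proof (rule ext)
        fix r
        have lin: "linear (\<lambda>v. A r *v v)" by simp
        have "A r *v \<xi>st r = (\<Sum>y\<in>S. \<mu> y *\<^sub>R (A r *v \<xi>s (\<iota> y) k r))"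
          unfolding \<xi>st_def by (simp add: linear_sum[OF lin] linear_scale[OF lin] o_def)
        then show "(\<Sum>y\<in>S. \<mu> y *\<^sub>R (A r *v \<xi>s (\<iota> y) k r + \<omega> (\<iota> y) k r)) = A r *v \<xi>st r + \<omega>st r"
          by (simp add: \<omega>st_def scaleR_add_right sum.distrib)
      qed
      moreover have "(\<Sum>y\<in>S. \<mu> y *\<^sub>R (\<xi>s (\<iota> y) k s - \<xi>s (\<iota> y) k t)) = \<xi>st s - \<xi>st t"
        by (simp add: \<xi>st_def scaleR_diff_right sum_subtractf)
      ultimately show ?thesis by simp
    qed
    define v0 where "v0 = x - \<xi>st t"
    define yv where "yv = (\<lambda>s. Y s *v v0)"
    have ye: "((\<lambda>r. A r *v yv r) has_integral (yv s - (x - \<xi>st t))) {t..s}" if s: "s \<in> {t..T}" for s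
      using yv_lemma[OF t Yt dY s, of v0] by (simp add: yv_def v0_def)
    have gxb: "g xb \<le> \<gamma> k"
    proof -
      have "g xb \<le> (\<Sum>y\<in>S. \<mu> y * g (xbar (\<iota> y) k))"
        unfolding xb_def by (rule convex_on_sum[OF Sfin Sne gcv \<mu>1]) (use \<mu>0 in auto)
      also have "\<dots> = (\<Sum>y\<in>S. \<mu> y * \<gamma> k)"
      proof (rule sum.cong)
        fix y assume "y \<in> S"
        then have "\<iota> y \<in> {1..nk k}" using \<iota> by blast
        then show "\<mu> y * g (xbar (\<iota> y) k) = \<mu> y * \<gamma> k" using gx k by simp
      qed simp
      also have "\<dots> = \<gamma> k" using \<mu>1 by (simp add: sum_distrib_right[symmetric])
      finally show ?thesis .
    qed
    have gz: "g (\<xi>st T + yv T) \<le> Lg * norm (Y T *v (x - \<xi>0)) + \<gamma> k"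
    proof -
      have "dist (g (xb + yv T)) (g xb) \<le> Lg * dist (xb + yv T) xb"
        by (rule lipschitz_onD[OF Lip]) auto
      then have "g (xb + yv T) \<le> g xb + Lg * norm (yv T)" by (simp add: dist_norm dist_real_def)
      then show ?thesis using gxb \<xi>st_T \<xi>st_t by (simp add: yv_def v0_def)
    qed
    have "value_fun A B E U D g T t x \<le> g (\<xi>st T + yv T)"
      unfolding value_fun_def
    proof (rule cSUP_least[OF strat_ne])
      fix \<delta> assume \<delta>: "\<delta> \<in> strategies U D t T"
      show "(INF u\<in>meas_maps U t T. g (end_state A B E T t x u (\<delta> u))) \<le> g (\<xi>st T + yv T)"
        by (rule L_game[OF tT Ac' Bc' Ec' Uc Une Dc Dne Lg0 Lip \<delta> \<omega>stW \<xi>e ye])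
    qed
    then show ?thesis using gz by simp
  qed
  have fin: "finite ((\<lambda>k. Lg * (INF \<xi>\<in>convex hull ((\<lambda>i. \<xi>s i k t) ` {1..nk k}).
                        norm (state_trans A T T t *v (x - \<xi>))) + \<gamma> k) ` {1..N})" by simp
  have ne: "((\<lambda>k. Lg * (INF \<xi>\<in>convex hull ((\<lambda>i. \<xi>s i k t) ` {1..nk k}).
                        norm (state_trans A T T t *v (x - \<xi>))) + \<gamma> k) ` {1..N}) \<noteq> {}" using N1 by simp
  show ?thesis
    unfolding Min_ge_iff[OF fin ne]
  proof
    fix z assume "z \<in> (\<lambda>k. Lg * (INF \<xi>\<in>convex hull ((\<lambda>i. \<xi>s i k t) ` {1..nk k}).
                        norm (state_trans A T T t *v (x - \<xi>))) + \<gamma> k) ` {1..N}"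
    then obtain k where k: "k \<in> {1..N}" and z: "z = Lg * (INF \<xi>\<in>convex hull ((\<lambda>i. \<xi>s i k t) ` {1..nk k}).
                        norm (state_trans A T T t *v (x - \<xi>))) + \<gamma> k" by blast
    have Hne: "convex hull ((\<lambda>i. \<xi>s i k t) ` {1..nk k}) \<noteq> {}" using nk1 k by auto
    show "value_fun A B E U D g T t x \<le> z"
    proof (cases "Lg = 0")
      case True
      obtain \<xi>0 where "\<xi>0 \<in> convex hull ((\<lambda>i. \<xi>s i k t) ` {1..nk k})" using Hne by blast
      then show ?thesis using main[OF k] True z by fastforce
    next
      case False
      then have Lgp: "Lg > 0" using Lg0 by simp
      have "(value_fun A B E U D g T t x - \<gamma> k) / Lg \<le> (INF \<xi>\<in>convex hull ((\<lambda>i. \<xi>s i k t) ` {1..nk k}).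
                        norm (state_trans A T T t *v (x - \<xi>)))"
      proof (rule cINF_greatest[OF Hne])
        fix \<xi>0 assume "\<xi>0 \<in> convex hull ((\<lambda>i. \<xi>s i k t) ` {1..nk k})"
        then have "value_fun A B E U D g T t x - \<gamma> k \<le> Lg * norm (state_trans A T T t *v (x - \<xi>0))"
          using main[OF k] Phi by fastforce
        then show "(value_fun A B E U D g T t x - \<gamma> k) / Lg \<le> norm (state_trans A T T t *v (x - \<xi>0))"
          using Lgp by (simp add: divide_le_eq mult.commute)
      qed
      then show ?thesis using Lgp z by (simp add: divide_le_eq mult.commute)
    qed
  qed
qed


end
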